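(* Let $r\ge2$, $\mathbf z=(z_1,\dots,z_r)^\intercal\in\Omega^r$, and $t\in\mathbb C_\infty$ with $|t|_\infty\le1$. Then \[\sum'_{a_1,\dots,a_r\in A}\frac{a_1(t)}{a_1z_1+\dots+a_rz_r}=\tilde\pi\sum_{0\ne a_1\in A}a_1(t)\,u_{a_1}(\mathbf z).\]
   Context: Let $q$ be a prime power, $A=\mathbb F_q[\theta]$, $|\theta|_\infty=q$, $K_\infty=\mathbb F_q((1/\theta))$, $\mathbb C_\infty$ the completion of an algebraic closure of $K_\infty$; $a(t)$ is $a\in A$ with $\theta$ replaced by $t$. Fix $(-\theta)^{1/(q-1)}$, $\tilde\pi=\theta(-\theta)^{1/(q-1)}\prod_{i\ge1}(1-\theta^{1-q^i})^{-1}$. For an $A$-lattice $\Lambda\subset\mathbb C_\infty$ (free finitely generated discrete $A$-module), $\exp_\Lambda(x)=x\prod_{0\ne\lambda\in\Lambda}(1-x/\lambda)$. $\Omega^r$: vectors $\mathbf z=(z_1,\dots,z_r)^\intercal\in\mathbb C_\infty^r$ with $K_\infty$-linearly independent entries and $z_r=1$; $\tilde{\mathbf z}=(z_2,\dots,z_r)^\intercal$, $\tilde\pi\tilde{\mathbf z}A=A\tilde\pi z_2+\dots+A\tilde\pi z_r$. For $a\in A$, $u_a(\mathbf z)=\exp_{\tilde\pi\tilde{\mathbf z}A}(\tilde\pi az_1)^{-1}$. $\sum'$ excludes $(a_1,\dots,a_r)=(0,\dots,0)$. *)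

theory Defs
  imports "HOL-Computational_Algebra.Polynomial" "HOL-Library.Cardinality"
begin

text \<open>
  The field C_infinity is modelled abstractly: a field type 'c together with an embedding
  iota of the finite field F_q (a finite field type 'f, q = CARD('f)), an element theta,
  and an absolute value absv, subject to the conditions characterising C_infinity up to
  isomorphism (see Cinf_model).  A = F_q[theta] is the type 'f poly; an element a of A
  is sent to C_infinity by evaluation at theta, and a(t) is evaluation at t.
\<close>

definition evalA :: "('f::field \<Rightarrow> 'c::field) \<Rightarrow> 'f poly \<Rightarrow> 'c \<Rightarrow> 'c" where
  "evalA \<iota> a x = poly (map_poly \<iota> a) x"

definition aseq_lim :: "('c::ab_group_add \<Rightarrow> real) \<Rightarrow> (nat \<Rightarrow> 'c) \<Rightarrow> 'c \<Rightarrow> bool" where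
  "aseq_lim absv X L \<longleftrightarrow> (\<forall>e>0. \<exists>N. \<forall>n\<ge>N. absv (X n - L) < e)"

definition ahas_sum :: "('c::ab_group_add \<Rightarrow> real) \<Rightarrow> ('i \<Rightarrow> 'c) \<Rightarrow> 'i set \<Rightarrow> 'c \<Rightarrow> bool" where
  "ahas_sum absv f S s \<longleftrightarrow>
     (\<forall>e>0. \<exists>F0. finite F0 \<and> F0 \<subseteq> S \<and>
        (\<forall>F. finite F \<and> F0 \<subseteq> F \<and> F \<subseteq> S \<longrightarrow> absv (sum f F - s) < e))"

definition ahas_prod :: "('c::comm_ring_1 \<Rightarrow> real) \<Rightarrow> ('i \<Rightarrow> 'c) \<Rightarrow> 'i set \<Rightarrow> 'c \<Rightarrow> bool" where
  "ahas_prod absv f S p \<longleftrightarrow>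
     (\<forall>e>0. \<exists>F0. finite F0 \<and> F0 \<subseteq> S \<and>
        (\<forall>F. finite F \<and> F0 \<subseteq> F \<and> F \<subseteq> S \<longrightarrow> absv (prod f F - p) < e))"

text \<open>C_infinity: an algebraically closed field, complete for a non-archimedean absolute
  value with |theta| = q, containing F_q, in which the algebraic closure of F_q(theta) is dense.\<close>

definition Cinf_model :: "('f::{finite,field} \<Rightarrow> 'c::field) \<Rightarrow> 'c \<Rightarrow> ('c \<Rightarrow> real) \<Rightarrow> bool" where
  "Cinf_model \<iota> \<theta> absv \<longleftrightarrow>
     \<iota> 0 = 0 \<and> \<iota> 1 = 1 \<and> (\<forall>x y. \<iota> (x + y) = \<iota> x + \<iota> y) \<and> (\<forall>x y. \<iota> (x * y) = \<iota> x * \<iota> y)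
   \<and> (\<forall>x. absv x \<ge> 0) \<and> (\<forall>x. absv x = 0 \<longleftrightarrow> x = 0)
   \<and> (\<forall>x y. absv (x * y) = absv x * absv y)
   \<and> (\<forall>x y. absv (x + y) \<le> max (absv x) (absv y))
   \<and> absv \<theta> = real CARD('f)
   \<and> (\<forall>X. (\<forall>e>0. \<exists>N. \<forall>m\<ge>N. \<forall>n\<ge>N. absv (X m - X n) < e) \<longrightarrow> (\<exists>L. aseq_lim absv X L))
   \<and> (\<forall>p::'c poly. degree p > 0 \<longrightarrow> (\<exists>x. poly p x = 0))
   \<and> (\<forall>x e. e > 0 \<longrightarrow> (\<exists>y. absv (x - y) < e \<and>
        (\<exists>p::'f poly poly. p \<noteq> 0 \<and> poly (map_poly (\<lambda>b. evalA \<iota> b \<theta>) p) y = 0)))"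

definition Kinf :: "('f::field \<Rightarrow> 'c::field) \<Rightarrow> 'c \<Rightarrow> ('c \<Rightarrow> real) \<Rightarrow> 'c set" where
  "Kinf \<iota> \<theta> absv = {x. \<forall>e>0. \<exists>a b. b \<noteq> 0 \<and> absv (x - evalA \<iota> a \<theta> / evalA \<iota> b \<theta>) < e}"

definition Omega :: "('f::field \<Rightarrow> 'c::field) \<Rightarrow> 'c \<Rightarrow> ('c \<Rightarrow> real) \<Rightarrow> nat \<Rightarrow> (nat \<Rightarrow> 'c) set" where
  "Omega \<iota> \<theta> absv r = {z. z r = 1 \<and>
     (\<forall>c. (\<forall>i\<in>{1..r}. c i \<in> Kinf \<iota> \<theta> absv) \<longrightarrow> (\<Sum>i=1..r. c i * z i) = 0 \<longrightarrow> (\<forall>i\<in>{1..r}. c i = 0))}"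

text \<open>pi-tilde = theta * zeta * prod_{i>=1} (1 - theta^(1-q^i))^(-1), where zeta is the fixed
  (q-1)-st root of -theta.\<close>

definition pitilde :: "('f::{finite,field} \<Rightarrow> 'c::field) \<Rightarrow> 'c \<Rightarrow> ('c \<Rightarrow> real) \<Rightarrow> 'c \<Rightarrow> 'c" where
  "pitilde \<iota> \<theta> absv \<zeta> = \<theta> * \<zeta> *
     (THE L. aseq_lim absv (\<lambda>n. \<Prod>i=1..n. inverse (1 - inverse (\<theta> ^ (CARD('f) ^ i - 1)))) L)"

definition zlattice :: "('f::{finite,field} \<Rightarrow> 'c::field) \<Rightarrow> 'c \<Rightarrow> ('c \<Rightarrow> real) \<Rightarrow> 'c \<Rightarrow> nat \<Rightarrow> (nat \<Rightarrow> 'c) \<Rightarrow> 'c set" where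
  "zlattice \<iota> \<theta> absv \<zeta> r z =
     {\<Sum>i=2..r. pitilde \<iota> \<theta> absv \<zeta> * evalA \<iota> (a i) \<theta> * z i | a. True}"

definition expL :: "('c::field \<Rightarrow> real) \<Rightarrow> 'c set \<Rightarrow> 'c \<Rightarrow> 'c" where
  "expL absv Lam x = x * (THE P. ahas_prod absv (\<lambda>l. 1 - x / l) (Lam - {0}) P)"

definition uA :: "('f::{finite,field} \<Rightarrow> 'c::field) \<Rightarrow> 'c \<Rightarrow> ('c \<Rightarrow> real) \<Rightarrow> 'c \<Rightarrow> nat \<Rightarrow> 'f poly \<Rightarrow> (nat \<Rightarrow> 'c) \<Rightarrow> 'c" where
  "uA \<iota> \<theta> absv \<zeta> r a z =
     inverse (expL absv (zlattice \<iota> \<theta> absv \<zeta> r z) (pitilde \<iota> \<theta> absv \<zeta> * evalA \<iota> a \<theta> * z 1))"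

end

theory Submission
  imports Defs
begin

locale ultra =
  fixes absv :: "'c::field \<Rightarrow> real"
  assumes nonneg: "absv x \<ge> 0"
    and zero_iff: "absv x = 0 \<longleftrightarrow> x = 0"
    and amult: "absv (x * y) = absv x * absv y"
    and ultra: "absv (x + y) \<le> max (absv x) (absv y)"
    and complete: "\<And>X. (\<forall>e>0. \<exists>N. \<forall>m\<ge>N. \<forall>n\<ge>N. absv (X m - X n) < e) \<Longrightarrow> \<exists>L. aseq_lim absv X L"
begin

lemma a0[simp]: "absv 0 = 0" using zero_iff by simp

lemma a1[simp]: "absv 1 = 1"
proof -
  have "absv 1 = absv 1 * absv 1" using amult[of 1 1] by simp
  moreover have "absv 1 \<noteq> 0" using zero_iff by simp
  ultimately show ?thesis by simp
qed

lemma aminus1: "absv (-1) = 1"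
proof -
  have "absv (-1) * absv (-1) = 1" using amult[of "-1" "-1"] by simp
  then have "(absv (-1) - 1) * (absv (-1) + 1) = 0" by (simp add: algebra_simps)
  moreover have "absv (-1) + 1 \<noteq> 0" using nonneg[of "-1"] by linarith
  ultimately show ?thesis by simp
qed

lemma aminus[simp]: "absv (- x) = absv x"
  using amult[of "-1" x] aminus1 by simp

lemma adiff_comm: "absv (x - y) = absv (y - x)"
  by (metis aminus minus_diff_eq)

lemma adiff: "absv (x - y) \<le> max (absv x) (absv y)"
  using ultra[of x "-y"] by simp

lemma atri: "absv (x - z) \<le> max (absv (x - y)) (absv (y - z))"
  using ultra[of "x - y" "y - z"] by simp

lemma ainverse: "absv (inverse x) = inverse (absv x)"
proof (cases "x = 0")
  case False
  then have "absv x * absv (inverse x) = 1" using amult[of x "inverse x"] by simp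
  then show ?thesis by (metis inverse_unique)
qed simp

lemma adivide: "absv (x / y) = absv x / absv y"
  by (simp add: divide_inverse amult ainverse)

lemma apower: "absv (x ^ n) = absv x ^ n"
  by (induction n) (simp_all add: amult)

lemma astrict: assumes "absv y < absv x" shows "absv (x + y) = absv x"
proof -
  have "absv x = absv ((x + y) - y)" by simp
  also have "\<dots> \<le> max (absv (x + y)) (absv y)" by (rule adiff)
  finally have "absv x \<le> absv (x + y)" using assms by auto
  moreover have "absv (x + y) \<le> absv x" using ultra[of x y] assms by simp
  ultimately show ?thesis by simp
qed

lemma asum_less: "finite F \<Longrightarrow> e > 0 \<Longrightarrow> (\<And>i. i \<in> F \<Longrightarrow> absv (f i) < e) \<Longrightarrow> absv (sum f F) < e"
proof (induction F rule: finite_induct)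
  case (insert x F)
  have "absv (f x) < e" "absv (sum f F) < e" using insert by auto
  then show ?case using insert(1,2) by (simp, intro le_less_trans[OF ultra]) simp
qed simp

lemma asum_le: "finite F \<Longrightarrow> e \<ge> 0 \<Longrightarrow> (\<And>i. i \<in> F \<Longrightarrow> absv (f i) \<le> e) \<Longrightarrow> absv (sum f F) \<le> e"
proof (induction F rule: finite_induct)
  case (insert x F)
  have "absv (f x) \<le> e" "absv (sum f F) \<le> e" using insert by auto
  then show ?case using insert(1,2) by (simp, intro order_trans[OF ultra]) simp
qed simp

lemma aprod_less: "finite F \<Longrightarrow> e > 0 \<Longrightarrow> e \<le> 1 \<Longrightarrow> (\<And>i. i \<in> F \<Longrightarrow> absv (g i - 1) < e)
   \<Longrightarrow> absv (prod g F - 1) < e"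
proof (induction F rule: finite_induct)
  case (insert x F)
  let ?Q = "prod g F"
  have IH: "absv (?Q - 1) < e" using insert by auto
  have Q1: "absv ?Q \<le> 1" using ultra[of "?Q - 1" 1] IH insert.prems by simp
  have eq: "prod g (insert x F) - 1 = (g x - 1) * ?Q + (?Q - 1)" using insert by (simp add: algebra_simps)
  have A:  "absv ((g x - 1) * ?Q) < e"
  proof -
    have "absv ((g x - 1) * ?Q) = absv (g x - 1) * absv ?Q" by (rule amult)
    also have "\<dots> \<le> absv (g x - 1)" using Q1 nonneg[of "g x - 1"] by (simp add: mult_left_le)
    also have "\<dots> < e" using insert by auto
    finally show ?thesis .
  qed
  show ?case unfolding eq by (rule le_less_trans[OF ultra]) (simp add: A IH)
qed simp

lemma aprod_le1: "finite F \<Longrightarrow> (\<And>i. i \<in> F \<Longrightarrow> absv (g i - 1) < 1) \<Longrightarrow> absv (prod g F) \<le> 1"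
proof -
  assume "finite F" "\<And>i. i \<in> F \<Longrightarrow> absv (g i - 1) < 1"
  then have "absv (prod g F - 1) < 1" using aprod_less[of F 1 g] by auto
  then show ?thesis using ultra[of "prod g F - 1" 1] by simp
qed

lemma small_zero: "(\<And>e. e > 0 \<Longrightarrow> absv x < e) \<Longrightarrow> x = 0"
  using nonneg[of x] zero_iff[of x] by (metis less_irrefl order_le_less)

lemma small_zero_le: "(\<And>e. e > 0 \<Longrightarrow> absv x \<le> C * e) \<Longrightarrow> x = 0"
proof (rule small_zero)
  fix e :: real assume e: "e > 0" "\<And>e. e > 0 \<Longrightarrow> absv x \<le> C * e"
  have C: "C \<ge> 0" using e(2)[of 1] nonneg[of x] by simp
  have "e / (C + 1) > 0" using C e(1) by simp
  then have "absv x \<le> C * (e / (C + 1))" using e(2) by blast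
  also have "\<dots> < e" using C e(1) by (simp add: field_simps)
  finally show "absv x < e" .
qed

lemma aseq_lim_ev: "aseq_lim absv X L \<longleftrightarrow> (\<forall>e>0. eventually (\<lambda>n. absv (X n - L) < e) sequentially)"
  unfolding aseq_lim_def eventually_sequentially by simp

lemma aseq_lim_unique: "aseq_lim absv X L \<Longrightarrow> aseq_lim absv X L' \<Longrightarrow> L = L'"
proof -
  assume A: "aseq_lim absv X L" "aseq_lim absv X L'"
  have "L' - L = 0"
  proof (rule small_zero)
    fix e :: real assume "e > 0"
    then have "eventually (\<lambda>n. absv (X n - L) < e \<and> absv (X n - L') < e) sequentially"
      using A unfolding aseq_lim_ev by (simp add: eventually_conj)
    then obtain n where "absv (X n - L) < e" "absv (X n - L') < e" using eventually_sequentially by auto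
    then have "absv (L' - X n) < e" using adiff_comm[of L' "X n"] by simp
    then show "absv (L' - L) < e" using \<open>absv (X n - L) < e\<close> by (intro le_less_trans[OF atri[of L' L "X n"]]) simp
  qed
  then show ?thesis by simp
qed

lemma ahas_sumD: assumes "ahas_sum absv f S s" "e > 0"
  obtains F0 where "finite F0" "F0 \<subseteq> S" "\<forall>F. finite F \<and> F0 \<subseteq> F \<and> F \<subseteq> S \<longrightarrow> absv (sum f F - s) < e"
proof -
  have "\<forall>e>0. \<exists>F0. finite F0 \<and> F0 \<subseteq> S \<and> (\<forall>F. finite F \<and> F0 \<subseteq> F \<and> F \<subseteq> S \<longrightarrow> absv (sum f F - s) < e)"
    using assms(1) unfolding ahas_sum_def .
  then have "\<exists>F0. finite F0 \<and> F0 \<subseteq> S \<and> (\<forall>F. finite F \<and> F0 \<subseteq> F \<and> F \<subseteq> S \<longrightarrow> absv (sum f F - s) < e)"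
    using assms(2) by simp
  then show ?thesis using that by blast
qed

lemma ahas_prodD: assumes "ahas_prod absv f S s" "e > 0"
  obtains F0 where "finite F0" "F0 \<subseteq> S" "\<forall>F. finite F \<and> F0 \<subseteq> F \<and> F \<subseteq> S \<longrightarrow> absv (prod f F - s) < e"
proof -
  have "\<forall>e>0. \<exists>F0. finite F0 \<and> F0 \<subseteq> S \<and> (\<forall>F. finite F \<and> F0 \<subseteq> F \<and> F \<subseteq> S \<longrightarrow> absv (prod f F - s) < e)"
    using assms(1) unfolding ahas_prod_def .
  then have "\<exists>F0. finite F0 \<and> F0 \<subseteq> S \<and> (\<forall>F. finite F \<and> F0 \<subseteq> F \<and> F \<subseteq> S \<longrightarrow> absv (prod f F - s) < e)"
    using assms(2) by simp
  then show ?thesis using that by blast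
qed

lemma ahas_sum_unique: "ahas_sum absv f S s \<Longrightarrow> ahas_sum absv f S s' \<Longrightarrow> s = s'"
proof -
  assume A: "ahas_sum absv f S s" "ahas_sum absv f S s'"
  have "s' - s = 0"
  proof (rule small_zero)
    fix e :: real assume e: "e > 0"
    obtain F0 where F0: "finite F0" "F0 \<subseteq> S" "\<forall>F. finite F \<and> F0 \<subseteq> F \<and> F \<subseteq> S \<longrightarrow> absv (sum f F - s) < e"
      by (rule ahas_sumD[OF A(1)]) (use e in auto)
    obtain F1 where F1: "finite F1" "F1 \<subseteq> S" "\<forall>F. finite F \<and> F1 \<subseteq> F \<and> F \<subseteq> S \<longrightarrow> absv (sum f F - s') < e"
      by (rule ahas_sumD[OF A(2)]) (use e in auto)
    have "absv (sum f (F0 \<union> F1) - s) < e" "absv (sum f (F0 \<union> F1) - s') < e" using F0 F1 by auto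
    then show "absv (s' - s) < e" using adiff_comm[of s' "sum f (F0 \<union> F1)"] by (intro le_less_trans[OF atri[of s' s "sum f (F0 \<union> F1)"]]) simp
  qed
  then show ?thesis by simp
qed

lemma ahas_prod_unique: "ahas_prod absv f S s \<Longrightarrow> ahas_prod absv f S s' \<Longrightarrow> s = s'"
proof -
  assume A: "ahas_prod absv f S s" "ahas_prod absv f S s'"
  have "s' - s = 0"
  proof (rule small_zero)
    fix e :: real assume e: "e > 0"
    obtain F0 where F0: "finite F0" "F0 \<subseteq> S" "\<forall>F. finite F \<and> F0 \<subseteq> F \<and> F \<subseteq> S \<longrightarrow> absv (prod f F - s) < e"
      by (rule ahas_prodD[OF A(1)]) (use e in auto)
    obtain F1 where F1: "finite F1" "F1 \<subseteq> S" "\<forall>F. finite F \<and> F1 \<subseteq> F \<and> F \<subseteq> S \<longrightarrow> absv (prod f F - s') < e"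
      by (rule ahas_prodD[OF A(2)]) (use e in auto)
    have "absv (prod f (F0 \<union> F1) - s) < e" "absv (prod f (F0 \<union> F1) - s') < e" using F0 F1 by auto
    then show "absv (s' - s) < e" using adiff_comm[of s' "prod f (F0 \<union> F1)"] by (intro le_less_trans[OF atri[of s' s "prod f (F0 \<union> F1)"]]) simp
  qed
  then show ?thesis by simp
qed

lemma ahas_sum_cong: "(\<And>x. x \<in> S \<Longrightarrow> f x = g x) \<Longrightarrow> ahas_sum absv f S s \<Longrightarrow> ahas_sum absv g S s"
proof -
  assume A: "\<And>x. x \<in> S \<Longrightarrow> f x = g x" "ahas_sum absv f S s"
  have "\<And>F. F \<subseteq> S \<Longrightarrow> sum f F = sum g F" using A(1) by (intro sum.cong) auto
  then show ?thesis using A(2) unfolding ahas_sum_def by simp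
qed

lemma ahas_sum_scale: assumes "ahas_sum absv f S s" shows "ahas_sum absv (\<lambda>x. c * f x) S (c * s)"
proof (cases "c = 0")
  case True
  then show ?thesis unfolding ahas_sum_def by auto
next
  case False
  then have c: "absv c > 0" using zero_iff[of c] nonneg[of c] by linarith
  show ?thesis unfolding ahas_sum_def
  proof (intro allI impI)
    fix e :: real assume "e > 0"
    then have "e / absv c > 0" using c by simp
    then obtain F0 where F0: "finite F0" "F0 \<subseteq> S" "\<forall>F. finite F \<and> F0 \<subseteq> F \<and> F \<subseteq> S \<longrightarrow> absv (sum f F - s) < e / absv c"
      by (rule ahas_sumD[OF assms(1)])
    show "\<exists>F0. finite F0 \<and> F0 \<subseteq> S \<and> (\<forall>F. finite F \<and> F0 \<subseteq> F \<and> F \<subseteq> S \<longrightarrow> absv ((\<Sum>x\<in>F. c * f x) - c * s) < e)"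
    proof (intro exI[of _ F0] conjI allI impI)
      fix F assume F: "finite F \<and> F0 \<subseteq> F \<and> F \<subseteq> S"
      have "(\<Sum>x\<in>F. c * f x) - c * s = c * (sum f F - s)" by (simp add: sum_distrib_left algebra_simps)
      then have "absv ((\<Sum>x\<in>F. c * f x) - c * s) = absv c * absv (sum f F - s)" by (simp add: amult)
      also have "\<dots> < absv c * (e / absv c)" using F0 F c by (intro mult_strict_left_mono) auto
      finally show "absv ((\<Sum>x\<in>F. c * f x) - c * s) < e" using c by simp
    qed (use F0 in auto)
  qed
qed

lemma ahas_sum_zero: "(\<And>x. x \<in> S \<Longrightarrow> f x = 0) \<Longrightarrow> ahas_sum absv f S 0"
  unfolding ahas_sum_def by (intro allI impI exI[of _ "{}"]) (auto simp: subset_eq)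

lemma ahas_sum_reindex: assumes "bij_betw h A B" "ahas_sum absv g B s"
  shows "ahas_sum absv (\<lambda>x. g (h x)) A s"
  unfolding ahas_sum_def
proof (intro allI impI)
  fix e :: real assume "e > 0"
  then obtain F0 where F0: "finite F0" "F0 \<subseteq> B" "\<forall>F. finite F \<and> F0 \<subseteq> F \<and> F \<subseteq> B \<longrightarrow> absv (sum g F - s) < e"
    by (rule ahas_sumD[OF assms(2)])
  have inj: "inj_on h A" using assms(1) bij_betw_def by blast
  let ?G0 = "h -` F0 \<inter> A"
  show "\<exists>F0. finite F0 \<and> F0 \<subseteq> A \<and> (\<forall>F. finite F \<and> F0 \<subseteq> F \<and> F \<subseteq> A \<longrightarrow> absv ((\<Sum>x\<in>F. g (h x)) - s) < e)"
  proof (intro exI[of _ ?G0] conjI allI impI)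
    show "finite ?G0" using F0(1) inj by (rule finite_vimage_IntI)
    fix F assume F: "finite F \<and> ?G0 \<subseteq> F \<and> F \<subseteq> A"
    have injF: "inj_on h F" using inj F inj_on_subset by blast
    have "F0 \<subseteq> h ` F"
    proof
      fix b assume "b \<in> F0"
      then obtain a where "a \<in> A" "h a = b" using F0(2) assms(1) unfolding bij_betw_def by blast
      then show "b \<in> h ` F" using F \<open>b \<in> F0\<close> by auto
    qed
    moreover have "h ` F \<subseteq> B" using F assms(1) unfolding bij_betw_def by blast
    ultimately have "absv (sum g (h ` F) - s) < e" using F0 F by auto
    then show "absv ((\<Sum>x\<in>F. g (h x)) - s) < e" using sum.reindex[OF injF, of g] by simp
  qed auto
qed

lemma ahas_sum_drop: assumes "ahas_sum absv f S s" "\<And>x. x \<in> T \<Longrightarrow> f x = 0"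
  shows "ahas_sum absv f (S - T) s"
  unfolding ahas_sum_def
proof (intro allI impI)
  fix e :: real assume "e > 0"
  then obtain F0 where F0: "finite F0" "F0 \<subseteq> S" "\<forall>F. finite F \<and> F0 \<subseteq> F \<and> F \<subseteq> S \<longrightarrow> absv (sum f F - s) < e"
    by (rule ahas_sumD[OF assms(1)])
  show "\<exists>F0. finite F0 \<and> F0 \<subseteq> S - T \<and> (\<forall>F. finite F \<and> F0 \<subseteq> F \<and> F \<subseteq> S - T \<longrightarrow> absv (sum f F - s) < e)"
  proof (intro exI[of _ "F0 - T"] conjI allI impI)
    fix F assume F: "finite F \<and> F0 - T \<subseteq> F \<and> F \<subseteq> S - T"
    have "F \<inter> (F0 \<inter> T) = {}" using F by auto
    then have "sum f (F \<union> (F0 \<inter> T)) = sum f F + sum f (F0 \<inter> T)"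
      using F F0 by (intro sum.union_disjoint) auto
    moreover have "sum f (F0 \<inter> T) = 0" using assms(2) by simp
    ultimately have "sum f (F \<union> (F0 \<inter> T)) = sum f F" by simp
    moreover have "absv (sum f (F \<union> (F0 \<inter> T)) - s) < e" using F0 F by (intro F0(3)[rule_format]) auto
    ultimately show "absv (sum f F - s) < e" by simp
  qed (use F0 in auto)
qed

end

context ultra begin

lemma cauchy_helper:
  assumes key: "\<And>m n. n \<le> m \<Longrightarrow> absv (X m - X n) \<le> K / real (Suc n)"
  shows "\<exists>L. aseq_lim absv X L"
proof (rule complete, intro allI impI)
  fix e :: real assume e: "e > 0"
  have K: "K \<ge> 0" using key[of 0 0] nonneg[of 0] by simp
  have "e / (K + 1) > 0" using e K by simp
  then obtain N where N: "inverse (real (Suc N)) < e / (K + 1)" using reals_Archimedean by blast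
  have b: "K / real (Suc n) < e" if "n \<ge> N" for n
  proof -
    have "K / real (Suc n) \<le> K / real (Suc N)" using K that by (intro divide_left_mono) auto
    also have "\<dots> \<le> (K + 1) * inverse (real (Suc N))" using K by (simp add: field_simps)
    also have "\<dots> < (K + 1) * (e / (K + 1))" using N K by (intro mult_strict_left_mono) auto
    also have "\<dots> = e" using K by simp
    finally show ?thesis .
  qed
  show "\<exists>N. \<forall>m\<ge>N. \<forall>n\<ge>N. absv (X m - X n) < e"
  proof (intro exI[of _ N] allI impI)
    fix m n assume mn: "m \<ge> N" "n \<ge> N"
    show "absv (X m - X n) < e"
    proof (cases "n \<le> m")
      case True
      then show ?thesis using key[of n m] b[of n] mn by simp
    next
      case False
      then show ?thesis using key[of m n] b[of m] mn adiff_comm[of "X m" "X n"] by simp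
    qed
  qed
qed

lemma ahas_sum_exists:
  assumes fin: "\<And>e. e > 0 \<Longrightarrow> finite {x\<in>S. e \<le> absv (f x)}"
  shows "\<exists>s. ahas_sum absv f S s"
proof -
  define F where "F n = {x\<in>S. 1 / real (Suc n) \<le> absv (f x)}" for n
  have finF: "finite (F n)" for n using fin[of "1/real(Suc n)"] by (simp add: F_def)
  have monoF: "F m \<subseteq> F n" if "m \<le> n" for m n
  proof -
    have "1 / real (Suc n) \<le> 1 / real (Suc m)" using that by (simp add: frac_le)
    then show ?thesis unfolding F_def by auto
  qed
  define \<sigma> where "\<sigma> n = sum f (F n)" for n
  have tail: "absv (sum f (G - F n)) < 1 / real (Suc n)" if "finite G" "G \<subseteq> S" for G n
    using that by (intro asum_less) (auto simp: F_def)
  have key: "absv (\<sigma> m - \<sigma> n) \<le> 1 / real (Suc n)" if "n \<le> m" for m n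
  proof -
    have "\<sigma> m = sum f (F m - F n) + \<sigma> n" unfolding \<sigma>_def
      using monoF[OF that] finF by (intro sum.subset_diff) auto
    then have "\<sigma> m - \<sigma> n = sum f (F m - F n)" by simp
    moreover have "F m \<subseteq> S" by (auto simp: F_def)
    ultimately show ?thesis using tail[of "F m" n] finF by simp
  qed
  obtain s where lim: "aseq_lim absv \<sigma> s" using cauchy_helper[of \<sigma> 1] key by auto
  have "ahas_sum absv f S s" unfolding ahas_sum_def
  proof (intro allI impI)
    fix e :: real assume e: "e > 0"
    obtain N1 where N1: "inverse (real (Suc N1)) < e" using reals_Archimedean e by blast
    obtain N2 where N2: "\<forall>n\<ge>N2. absv (\<sigma> n - s) < e" using lim e unfolding aseq_lim_def by blast
    define N where "N = max N1 N2"
    show "\<exists>F0. finite F0 \<and> F0 \<subseteq> S \<and> (\<forall>G. finite G \<and> F0 \<subseteq> G \<and> G \<subseteq> S \<longrightarrow> absv (sum f G - s) < e)"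
    proof (intro exI[of _ "F N"] conjI allI impI)
      fix G assume G: "finite G \<and> F N \<subseteq> G \<and> G \<subseteq> S"
      have "sum f G = sum f (G - F N) + \<sigma> N" unfolding \<sigma>_def using G by (intro sum.subset_diff) auto
      then have eq: "sum f G - s = sum f (G - F N) + (\<sigma> N - s)" by simp
      have "1 / real (Suc N) \<le> inverse (real (Suc N1))" unfolding N_def by (simp add: field_simps)
      then have "absv (sum f (G - F N)) < e" using tail[of G N] G N1 by simp
      moreover have "absv (\<sigma> N - s) < e" using N2 N_def by simp
      ultimately show "absv (sum f G - s) < e" unfolding eq by (intro le_less_trans[OF ultra]) simp
    qed (use finF in \<open>auto simp: F_def\<close>)
  qed
  then show ?thesis by blast
qed

lemma ahas_prod_exists:
  assumes fin: "\<And>e. e > 0 \<Longrightarrow> finite {x\<in>S. e \<le> absv (g x - 1)}"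
  shows "\<exists>p. ahas_prod absv g S p"
proof -
  define F where "F n = {x\<in>S. 1 / real (Suc (Suc n)) \<le> absv (g x - 1)}" for n
  have finF: "finite (F n)" for n using fin[of "1/real(Suc (Suc n))"] by (simp add: F_def)
  have monoF: "F m \<subseteq> F n" if "m \<le> n" for m n
  proof -
    have "1 / real (Suc (Suc n)) \<le> 1 / real (Suc (Suc m))" using that by (simp add: frac_le)
    then show ?thesis unfolding F_def by auto
  qed
  define \<pi> where "\<pi> n = prod g (F n)" for n
  have tail: "absv (prod g (G - F n) - 1) < 1 / real (Suc (Suc n))" if "finite G" "G \<subseteq> S" for G n
    using that by (intro aprod_less) (auto simp: F_def)
  have tail1: "absv (prod g (G - F n)) \<le> 1" if "finite G" "G \<subseteq> S" for G n
  proof -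
    have "1 / real (Suc (Suc n)) \<le> 1" by simp
    then have "absv (prod g (G - F n) - 1) < 1" using tail[OF that, of n] by linarith
    then show ?thesis using ultra[of "prod g (G - F n) - 1" 1] by (simp add: max_def split: if_splits)
  qed
  define B where "B = absv (\<pi> 0)"
  have FS: "F n \<subseteq> S" for n by (auto simp: F_def)
  have split: "prod g G = prod g (G - F n) * \<pi> n" if "F n \<subseteq> G" "finite G" for G n
    unfolding \<pi>_def using that by (intro prod.subset_diff) auto
  have bound: "absv (\<pi> n) \<le> B" for n
  proof -
    have "\<pi> n = prod g (F n - F 0) * \<pi> 0" using split[of 0 "F n"] monoF[of 0 n] finF \<pi>_def by simp
    then have "absv (\<pi> n) = absv (prod g (F n - F 0)) * B" by (simp add: amult B_def)
    also have "\<dots> \<le> 1 * B" using tail1[of "F n" 0] finF FS B_def nonneg by (intro mult_right_mono) auto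
    finally show ?thesis by simp
  qed
  have B0: "B \<ge> 0" using B_def nonneg by simp
  have diff: "absv (prod g G - \<pi> n) \<le> B / real (Suc n)" if "F n \<subseteq> G" "finite G" "G \<subseteq> S" for G n
  proof -
    have "prod g G - \<pi> n = \<pi> n * (prod g (G - F n) - 1)" using split[OF that(1,2)] by (simp add: algebra_simps)
    then have "absv (prod g G - \<pi> n) = absv (\<pi> n) * absv (prod g (G - F n) - 1)" by (simp add: amult)
    also have "\<dots> \<le> B * (1 / real (Suc (Suc n)))"
      using bound[of n] tail[OF that(2,3), of n] nonneg B0 by (intro mult_mono) auto
    also have "\<dots> \<le> B / real (Suc n)" using B0 by (simp add: frac_le)
    finally show ?thesis .
  qed
  have key: "absv (\<pi> m - \<pi> n) \<le> B / real (Suc n)" if "n \<le> m" for m n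
    using diff[of n "F m"] monoF[OF that] finF FS unfolding \<pi>_def by simp
  obtain p where lim: "aseq_lim absv \<pi> p" using cauchy_helper[of \<pi> B] key by auto
  have "ahas_prod absv g S p" unfolding ahas_prod_def
  proof (intro allI impI)
    fix e :: real assume e: "e > 0"
    have "e / (B + 1) > 0" using e B0 by simp
    then obtain N1 where N1: "inverse (real (Suc N1)) < e / (B + 1)" using reals_Archimedean by blast
    obtain N2 where N2: "\<forall>n\<ge>N2. absv (\<pi> n - p) < e" using lim e unfolding aseq_lim_def by blast
    define N where "N = max N1 N2"
    show "\<exists>F0. finite F0 \<and> F0 \<subseteq> S \<and> (\<forall>G. finite G \<and> F0 \<subseteq> G \<and> G \<subseteq> S \<longrightarrow> absv (prod g G - p) < e)"
    proof (intro exI[of _ "F N"] conjI allI impI)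
      fix G assume G: "finite G \<and> F N \<subseteq> G \<and> G \<subseteq> S"
      have eq: "prod g G - p = (prod g G - \<pi> N) + (\<pi> N - p)" by simp
      have "B / real (Suc N) \<le> B / real (Suc N1)" using B0 unfolding N_def by (intro divide_left_mono) auto
      also have "\<dots> \<le> (B + 1) * inverse (real (Suc N1))" using B0 by (simp add: field_simps)
      also have "\<dots> < (B + 1) * (e / (B + 1))" using N1 B0 by (intro mult_strict_left_mono) auto
      also have "\<dots> = e" using B0 by simp
      finally have "absv (prod g G - \<pi> N) < e" using diff[of N G] G by simp
      moreover have "absv (\<pi> N - p) < e" using N2 N_def by simp
      ultimately show "absv (prod g G - p) < e" unfolding eq by (intro le_less_trans[OF ultra]) simp
    qed (use finF FS in auto)
  qed
  then show ?thesis by blast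
qed

lemma ahas_sum_regroup:
  assumes A: "ahas_sum absv f S L" and P: "\<And>k. ahas_sum absv f {x\<in>S. key x = k} (s k)"
  shows "ahas_sum absv s UNIV L"
  unfolding ahas_sum_def
proof (intro allI impI)
  fix e :: real assume e: "e > 0"
  obtain F0 where F0: "finite F0" "F0 \<subseteq> S" "\<forall>F. finite F \<and> F0 \<subseteq> F \<and> F \<subseteq> S \<longrightarrow> absv (sum f F - L) < e"
    by (rule ahas_sumD[OF A e])
  have "\<forall>k. \<exists>Fk. finite Fk \<and> Fk \<subseteq> {x\<in>S. key x = k} \<and> (\<forall>F. finite F \<and> Fk \<subseteq> F \<and> F \<subseteq> {x\<in>S. key x = k} \<longrightarrow> absv (sum f F - s k) < e)"
  proof
    fix k
    obtain Fk where "finite Fk" "Fk \<subseteq> {x\<in>S. key x = k}" "\<forall>F. finite F \<and> Fk \<subseteq> F \<and> F \<subseteq> {x\<in>S. key x = k} \<longrightarrow> absv (sum f F - s k) < e"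
      by (rule ahas_sumD[OF P e])
    then show "\<exists>Fk. finite Fk \<and> Fk \<subseteq> {x\<in>S. key x = k} \<and> (\<forall>F. finite F \<and> Fk \<subseteq> F \<and> F \<subseteq> {x\<in>S. key x = k} \<longrightarrow> absv (sum f F - s k) < e)"
      by blast
  qed
  then obtain Fk where Fk: "\<And>k. finite (Fk k)" "\<And>k. Fk k \<subseteq> {x\<in>S. key x = k}"
     "\<And>k F. finite F \<Longrightarrow> Fk k \<subseteq> F \<Longrightarrow> F \<subseteq> {x\<in>S. key x = k} \<Longrightarrow> absv (sum f F - s k) < e"
    by metis
  define H where "H k = Fk k \<union> {x\<in>F0. key x = k}" for k
  have Hfin: "finite (H k)" for k using Fk(1) F0(1) by (simp add: H_def)
  have HS: "H k \<subseteq> {x\<in>S. key x = k}" for k using Fk(2) F0(2) by (auto simp: H_def)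
  have Hk: "absv (sum f (H k) - s k) < e" for k using Fk(3)[OF Hfin _ HS, of k] by (auto simp: H_def)
  show "\<exists>G0. finite G0 \<and> G0 \<subseteq> UNIV \<and> (\<forall>G. finite G \<and> G0 \<subseteq> G \<and> G \<subseteq> UNIV \<longrightarrow> absv (sum s G - L) < e)"
  proof (intro exI[of _ "key ` F0"] conjI allI impI)
    fix G assume G: "finite G \<and> key ` F0 \<subseteq> G \<and> G \<subseteq> UNIV"
    define F where "F = (\<Union>k\<in>G. H k)"
    have disj: "\<forall>i\<in>G. \<forall>j\<in>G. i \<noteq> j \<longrightarrow> H i \<inter> H j = {}" using HS by blast
    have sumF: "sum f F = (\<Sum>k\<in>G. sum f (H k))" unfolding F_def
      using G Hfin disj by (intro sum.UNION_disjoint) auto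
    have "F0 \<subseteq> F"
    proof
      fix x assume "x \<in> F0"
      then have "key x \<in> G" "x \<in> H (key x)" using G by (auto simp: H_def)
      then show "x \<in> F" unfolding F_def by blast
    qed
    moreover have "F \<subseteq> S" unfolding F_def using HS by blast
    moreover have "finite F" unfolding F_def using G Hfin by auto
    ultimately have 1: "absv (sum f F - L) < e" using F0(3) by blast
    have 2: "absv (\<Sum>k\<in>G. s k - sum f (H k)) < e"
      using G e Hk adiff_comm by (intro asum_less) auto
    have eq: "sum s G - L = (\<Sum>k\<in>G. s k - sum f (H k)) + (sum f F - L)"
      unfolding sumF by (simp add: sum_subtractf)
    show "absv (sum s G - L) < e" unfolding eq by (rule le_less_trans[OF ultra]) (use 1 2 in simp)
  qed (use F0 in auto)
qed

end

locale cinf =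
  fixes \<iota> :: "'f::{finite,field} \<Rightarrow> 'c::field" and \<theta> :: 'c and absv :: "'c \<Rightarrow> real"
  assumes cm: "Cinf_model \<iota> \<theta> absv"
begin

lemma is_ultra: "ultra absv"
  using cm unfolding Cinf_model_def ultra_def by blast

sublocale ultra absv by (rule is_ultra)

lemma i0[simp]: "\<iota> 0 = 0" and i1[simp]: "\<iota> 1 = 1" and iadd: "\<iota> (x + y) = \<iota> x + \<iota> y"
  and imult: "\<iota> (x * y) = \<iota> x * \<iota> y" and ath: "absv \<theta> = real CARD('f)"
  using cm unfolding Cinf_model_def by auto

lemma ineg: "\<iota> (- x) = - \<iota> x"
proof -
  have "\<iota> (- x) + \<iota> x = 0" using iadd[of "-x" x] by simp
  then show ?thesis by (simp add: eq_neg_iff_add_eq_0)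
qed

lemma ipow: "\<iota> (x ^ n) = \<iota> x ^ n"
  by (induction n) (simp_all add: imult)

lemma card_ge2: "CARD('f) \<ge> 2"
proof -
  have "card {0::'f, 1} \<le> CARD('f)" by (rule card_mono) auto
  then show ?thesis by simp
qed

lemma iabs: assumes "x \<noteq> 0" shows "absv (\<iota> x) = 1"
proof -
  have "\<not> inj (\<lambda>n::nat. x ^ n)"
  proof
    assume "inj (\<lambda>n::nat. x ^ n)"
    then have "finite (UNIV :: nat set)" using inj_on_finite[of "\<lambda>n::nat. x ^ n" UNIV UNIV] by simp
    then show False by simp
  qed
  then obtain m n :: nat where mn: "m \<noteq> n" "x ^ m = x ^ n" unfolding inj_def by blast
  have "\<exists>k>0. x ^ k = 1"
  proof (cases "m < n")
    case True
    then have "x ^ n = x ^ m * x ^ (n - m)" by (simp add: power_add[symmetric])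
    then have "x ^ (n - m) = 1" using mn assms by simp
    then show ?thesis using True by (intro exI[of _ "n - m"]) auto
  next
    case False
    then have "x ^ m = x ^ n * x ^ (m - n)" using mn by (simp add: power_add[symmetric])
    then have "x ^ (m - n) = 1" using mn assms by simp
    then show ?thesis using False mn by (intro exI[of _ "m - n"]) auto
  qed
  then obtain k where k: "k > 0" "x ^ k = 1" by blast
  then have "absv (\<iota> x) ^ k = 1" using ipow[of x k] apower[of "\<iota> x" k] by simp
  then show ?thesis using k(1) nonneg[of "\<iota> x"] power_eq_imp_eq_base[of "absv (\<iota> x)" k 1] by simp
qed

lemma iabs_le: "absv (\<iota> x) \<le> 1"
  by (cases "x = 0") (simp_all add: iabs)

lemma map_iota_add: "map_poly \<iota> (p + q) = map_poly \<iota> p + map_poly \<iota> q"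
  by (intro poly_eqI) (simp add: coeff_map_poly iadd)

lemma map_iota_pCons: "map_poly \<iota> (pCons c p) = pCons (\<iota> c) (map_poly \<iota> p)"
  by (rule map_poly_pCons) simp

lemma evalA_pCons: "evalA \<iota> (pCons c p) x = \<iota> c + x * evalA \<iota> p x"
  unfolding evalA_def map_iota_pCons by simp

lemma evalA_0[simp]: "evalA \<iota> 0 x = 0" unfolding evalA_def by simp
lemma evalA_1[simp]: "evalA \<iota> 1 x = 1" unfolding evalA_def by simp
lemma evalA_const: "evalA \<iota> [:c:] x = \<iota> c" unfolding evalA_def by (simp add: map_iota_pCons)

lemma evalA_add: "evalA \<iota> (p + q) x = evalA \<iota> p x + evalA \<iota> q x"
  unfolding evalA_def map_iota_add by simp

lemma evalA_minus: "evalA \<iota> (- p) x = - evalA \<iota> p x"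
proof -
  have "evalA \<iota> (- p) x + evalA \<iota> p x = 0" using evalA_add[of "-p" p x] by simp
  then show ?thesis by (simp add: eq_neg_iff_add_eq_0)
qed

lemma evalA_diff: "evalA \<iota> (p - q) x = evalA \<iota> p x - evalA \<iota> q x"
  using evalA_add[of p "-q" x] evalA_minus[of q x] by simp

lemma evalA_smult: "evalA \<iota> (smult c q) x = \<iota> c * evalA \<iota> q x"
proof -
  have "map_poly \<iota> (smult c q) = smult (\<iota> c) (map_poly \<iota> q)" by (rule map_poly_smult) (simp_all add: imult)
  then show ?thesis unfolding evalA_def by simp
qed

lemma evalA_mult: "evalA \<iota> (p * q) x = evalA \<iota> p x * evalA \<iota> q x"
proof (induction p rule: pCons_induct)
  case (pCons a p)
  have "pCons a p * q = smult a q + pCons 0 (p * q)" by (simp add: mult_pCons_left)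
  then have "evalA \<iota> (pCons a p * q) x = \<iota> a * evalA \<iota> q x + x * evalA \<iota> (p * q) x"
    by (simp add: evalA_add evalA_smult evalA_pCons)
  also have "\<dots> = evalA \<iota> (pCons a p) x * evalA \<iota> q x" using pCons.IH by (simp add: evalA_pCons algebra_simps)
  finally show ?case .
qed simp

lemma q_gt1: "real CARD('f) > 1" using card_ge2 by simp

lemma evalA_theta_abs: "p \<noteq> 0 \<Longrightarrow> absv (evalA \<iota> p \<theta>) = real CARD('f) ^ degree p"
proof (induction p rule: pCons_induct)
  case (pCons c p)
  show ?case
  proof (cases "p = 0")
    case True
    then have "c \<noteq> 0" using pCons.prems by simp
    then show ?thesis using True by (simp add: evalA_pCons iabs)
  next
    case False
    have "absv (\<theta> * evalA \<iota> p \<theta>) = real CARD('f) * real CARD('f) ^ degree p"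
      using pCons.IH[OF False] by (simp add: amult ath)
    moreover have "real CARD('f) * real CARD('f) ^ degree p \<ge> real CARD('f)"
      using q_gt1 by (simp add: one_le_power)
    ultimately have gt: "absv (\<iota> c) < absv (\<theta> * evalA \<iota> p \<theta>)" using iabs_le[of c] q_gt1 by linarith
    have "absv (evalA \<iota> (pCons c p) \<theta>) = absv (\<theta> * evalA \<iota> p \<theta> + \<iota> c)"
      by (simp add: evalA_pCons add.commute)
    also have "\<dots> = absv (\<theta> * evalA \<iota> p \<theta>)" using gt by (rule astrict)
    finally show ?thesis using pCons.IH[OF False] False by (simp add: amult ath)
  qed
qed simp

lemma evalA_nz: "p \<noteq> 0 \<Longrightarrow> evalA \<iota> p \<theta> \<noteq> 0"
  using evalA_theta_abs[of p] q_gt1 zero_iff by fastforce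

lemma evalA_t_le: "absv t \<le> 1 \<Longrightarrow> absv (evalA \<iota> p t) \<le> 1"
proof (induction p rule: pCons_induct)
  case (pCons c p)
  have "absv (t * evalA \<iota> p t) \<le> 1" using pCons nonneg by (simp add: amult mult_le_one)
  then show ?case using iabs_le[of c] by (simp add: evalA_pCons order_trans[OF ultra])
qed simp

definition K0 :: "'c set" where "K0 = {evalA \<iota> a \<theta> / evalA \<iota> b \<theta> | a b. b \<noteq> 0}"

lemma K0_eval: "evalA \<iota> a \<theta> \<in> K0"
  unfolding K0_def by (rule CollectI, rule exI[of _ a], rule exI[of _ 1]) simp

lemma K0_diff: assumes "x \<in> K0" "y \<in> K0" shows "x - y \<in> K0"
proof -
  obtain a b where x: "x = evalA \<iota> a \<theta> / evalA \<iota> b \<theta>" "b \<noteq> 0" using assms(1) unfolding K0_def by blast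
  obtain c d where y: "y = evalA \<iota> c \<theta> / evalA \<iota> d \<theta>" "d \<noteq> 0" using assms(2) unfolding K0_def by blast
  have nz: "evalA \<iota> b \<theta> \<noteq> 0" "evalA \<iota> d \<theta> \<noteq> 0" using x y evalA_nz by auto
  have "x - y = evalA \<iota> (a * d - c * b) \<theta> / evalA \<iota> (b * d) \<theta>"
    using nz by (simp add: x y evalA_diff evalA_mult field_simps)
  moreover have "b * d \<noteq> 0" using x y by simp
  ultimately show ?thesis unfolding K0_def by blast
qed

lemma K0_div: assumes "x \<in> K0" "y \<in> K0" shows "x / y \<in> K0"
proof -
  obtain a b where x: "x = evalA \<iota> a \<theta> / evalA \<iota> b \<theta>" "b \<noteq> 0" using assms(1) unfolding K0_def by blast
  obtain c d where y: "y = evalA \<iota> c \<theta> / evalA \<iota> d \<theta>" "d \<noteq> 0" using assms(2) unfolding K0_def by blast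
  have nz: "evalA \<iota> b \<theta> \<noteq> 0" "evalA \<iota> d \<theta> \<noteq> 0" using x y evalA_nz by auto
  show ?thesis
  proof (cases "c = 0")
    case True
    then have "x / y = evalA \<iota> 0 \<theta>" using y by simp
    then show ?thesis using K0_eval[of 0] by metis
  next
    case False
    then have nzc: "evalA \<iota> c \<theta> \<noteq> 0" using evalA_nz by auto
    have "x / y = evalA \<iota> (a * d) \<theta> / evalA \<iota> (b * c) \<theta>"
      using nz nzc by (simp add: x y evalA_mult field_simps)
    moreover have "b * c \<noteq> 0" using x False by simp
    ultimately show ?thesis unfolding K0_def by blast
  qed
qed

lemma K0_lim_Kinf: assumes "\<And>n. d n \<in> K0" "aseq_lim absv d L" shows "L \<in> Kinf \<iota> \<theta> absv"
  unfolding Kinf_def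
proof (intro CollectI allI impI)
  fix e :: real assume "e > 0"
  then obtain N where "\<forall>n\<ge>N. absv (d n - L) < e" using assms(2) unfolding aseq_lim_def by blast
  then have "absv (L - d N) < e" using adiff_comm by auto
  moreover obtain a b where "d N = evalA \<iota> a \<theta> / evalA \<iota> b \<theta>" "b \<noteq> 0" using assms(1)[of N] unfolding K0_def by blast
  ultimately show "\<exists>a b. b \<noteq> 0 \<and> absv (L - evalA \<iota> a \<theta> / evalA \<iota> b \<theta>) < e" by auto
qed

lemma K0_Kinf: "x \<in> K0 \<Longrightarrow> x \<in> Kinf \<iota> \<theta> absv"
  using K0_lim_Kinf[of "\<lambda>_. x" x] unfolding aseq_lim_def by simp

lemma eval_Kinf: "evalA \<iota> a \<theta> \<in> Kinf \<iota> \<theta> absv"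
  using K0_Kinf K0_eval by blast

lemma one_Kinf: "1 \<in> Kinf \<iota> \<theta> absv"
  using eval_Kinf[of 1] by simp

lemma zero_Kinf: "0 \<in> Kinf \<iota> \<theta> absv"
  using eval_Kinf[of 0] by simp

end

context cinf begin

lemma norm_equiv:
  fixes w :: "nat \<Rightarrow> 'c" and I :: "nat set"
  assumes "finite I"
  shows "(\<forall>c. (\<forall>i\<in>I. c i \<in> Kinf \<iota> \<theta> absv) \<longrightarrow> (\<Sum>i\<in>I. c i * w i) = 0 \<longrightarrow> (\<forall>i\<in>I. c i = 0))
    \<Longrightarrow> \<exists>C>0. \<forall>c. (\<forall>i\<in>I. c i \<in> K0) \<longrightarrow> (\<forall>j\<in>I. C * absv (c j) \<le> absv (\<Sum>i\<in>I. c i * w i))"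
  using assms
proof (induction I rule: finite_induct)
  case empty
  show ?case by (intro exI[of _ 1]) simp
next
  case (insert k I)
  let ?Ki = "Kinf \<iota> \<theta> absv"
  have indI: "\<forall>c. (\<forall>i\<in>I. c i \<in> ?Ki) \<longrightarrow> (\<Sum>i\<in>I. c i * w i) = 0 \<longrightarrow> (\<forall>i\<in>I. c i = 0)"
  proof (intro allI impI)
    fix c assume c: "\<forall>i\<in>I. c i \<in> ?Ki" "(\<Sum>i\<in>I. c i * w i) = 0"
    let ?c' = "c(k := 0)"
    have 1: "\<forall>i\<in>insert k I. ?c' i \<in> ?Ki" using c zero_Kinf by auto
    have "(\<Sum>i\<in>insert k I. ?c' i * w i) = (\<Sum>i\<in>I. ?c' i * w i)" using insert.hyps by simp
    also have "\<dots> = (\<Sum>i\<in>I. c i * w i)" using insert.hyps by (intro sum.cong) auto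
    finally have 2: "(\<Sum>i\<in>insert k I. ?c' i * w i) = 0" using c(2) by simp
    have "\<forall>i\<in>insert k I. ?c' i = 0" using insert.prems 1 2 by blast
    then show "\<forall>i\<in>I. c i = 0" using insert.hyps(2) by (metis fun_upd_other insertCI)
  qed
  obtain C where C: "C > 0" "\<forall>c. (\<forall>i\<in>I. c i \<in> K0) \<longrightarrow> (\<forall>j\<in>I. C * absv (c j) \<le> absv (\<Sum>i\<in>I. c i * w i))"
    using insert.IH[OF indI] by blast
  have "\<exists>D>0. \<forall>d. (\<forall>i\<in>I. d i \<in> K0) \<longrightarrow> D \<le> absv (w k + (\<Sum>i\<in>I. d i * w i))"
  proof (rule ccontr)
    assume neg: "\<not> (\<exists>D>0. \<forall>d. (\<forall>i\<in>I. d i \<in> K0) \<longrightarrow> D \<le> absv (w k + (\<Sum>i\<in>I. d i * w i)))"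
    have "\<forall>n. \<exists>d. (\<forall>i\<in>I. d i \<in> K0) \<and> absv (w k + (\<Sum>i\<in>I. d i * w i)) < 1 / real (Suc n)"
    proof
      fix n
      have "(1::real) / real (Suc n) > 0" by simp
      then have "\<not> (\<forall>d. (\<forall>i\<in>I. d i \<in> K0) \<longrightarrow> 1 / real (Suc n) \<le> absv (w k + (\<Sum>i\<in>I. d i * w i)))"
        using neg by blast
      then show "\<exists>d. (\<forall>i\<in>I. d i \<in> K0) \<and> absv (w k + (\<Sum>i\<in>I. d i * w i)) < 1 / real (Suc n)"
        by (simp add: not_le)
    qed
    then obtain dd where dd: "\<And>n. \<forall>i\<in>I. dd n i \<in> K0" "\<And>n. absv (w k + (\<Sum>i\<in>I. dd n i * w i)) < 1 / real (Suc n)"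
      by metis
    define y where "y n = w k + (\<Sum>i\<in>I. dd n i * w i)" for n
    have ydiff: "(\<Sum>i\<in>I. (dd n i - dd m i) * w i) = y n - y m" for n m
      unfolding y_def by (simp add: left_diff_distrib sum_subtractf)
    have bnd: "C * absv (dd n j - dd m j) \<le> max (1 / real (Suc n)) (1 / real (Suc m))" if "j \<in> I" for n m j
    proof -
      have "\<forall>i\<in>I. dd n i - dd m i \<in> K0" using dd(1) K0_diff by blast
      then have "C * absv (dd n j - dd m j) \<le> absv (\<Sum>i\<in>I. (dd n i - dd m i) * w i)"
        using spec[OF C(2), of "\<lambda>i. dd n i - dd m i"] that by simp
      then have "C * absv (dd n j - dd m j) \<le> absv (y n - y m)" unfolding ydiff .
      also have "\<dots> \<le> max (absv (y n)) (absv (y m))" by (rule adiff)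
      also have "\<dots> \<le> max (1 / real (Suc n)) (1 / real (Suc m))" using dd(2)[of n] dd(2)[of m] unfolding y_def
        by (intro max.mono) auto
      finally show ?thesis .
    qed
    have "\<exists>L. aseq_lim absv (\<lambda>n. dd n j) L" if j: "j \<in> I" for j
    proof (rule cauchy_helper[of _ "1 / C"])
      fix m n :: nat assume "n \<le> m"
      then have "max (1 / real (Suc m)) (1 / real (Suc n)) = 1 / real (Suc n)"
        by (simp add: max_def frac_le)
      then have "C * absv (dd m j - dd n j) \<le> 1 / real (Suc n)" using bnd[OF j, of m n] by simp
      then have "absv (dd m j - dd n j) \<le> (1 / real (Suc n)) / C" using C(1)
        by (simp add: pos_le_divide_eq mult.commute mult.left_commute)
      also have "(1 / real (Suc n)) / C = 1 / C / real (Suc n)" by (simp add: mult.commute)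
      finally show "absv (dd m j - dd n j) \<le> 1 / C / real (Suc n)" .
    qed
    then obtain \<delta> where \<delta>: "\<And>j. j \<in> I \<Longrightarrow> aseq_lim absv (\<lambda>n. dd n j) (\<delta> j)" by metis
    have \<delta>K: "\<delta> j \<in> ?Ki" if "j \<in> I" for j using K0_lim_Kinf[OF _ \<delta>[OF that]] dd(1) that by blast
    define c where "c = (\<lambda>i. if i = k then 1 else \<delta> i)"
    have cK: "\<forall>i\<in>insert k I. c i \<in> ?Ki" using one_Kinf \<delta>K by (auto simp: c_def)
    have "(\<Sum>i\<in>insert k I. c i * w i) = c k * w k + (\<Sum>i\<in>I. c i * w i)" using insert.hyps by simp
    also have "(\<Sum>i\<in>I. c i * w i) = (\<Sum>i\<in>I. \<delta> i * w i)" using insert.hyps by (intro sum.cong) (auto simp: c_def)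
    finally have Y: "(\<Sum>i\<in>insert k I. c i * w i) = w k + (\<Sum>i\<in>I. \<delta> i * w i)" by (simp add: c_def)
    have "w k + (\<Sum>i\<in>I. \<delta> i * w i) = 0"
    proof (rule small_zero)
      fix e :: real assume e: "e > 0"
      have ev1: "eventually (\<lambda>n. \<forall>i\<in>I. absv ((\<delta> i - dd n i) * w i) < e) sequentially"
      proof (rule eventually_ball_finite[OF insert.hyps(1)], rule ballI)
        fix i assume i: "i \<in> I"
        have wpos: "absv (w i) + 1 > 0" using nonneg[of "w i"] by linarith
        then have "e / (absv (w i) + 1) > 0" using e by simp
        then have "eventually (\<lambda>n. absv (dd n i - \<delta> i) < e / (absv (w i) + 1)) sequentially"
          using \<delta>[OF i] unfolding aseq_lim_ev by blast
        then show "eventually (\<lambda>n. absv ((\<delta> i - dd n i) * w i) < e) sequentially"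
        proof (rule eventually_mono)
          fix n assume h: "absv (dd n i - \<delta> i) < e / (absv (w i) + 1)"
          have "absv ((\<delta> i - dd n i) * w i) = absv (dd n i - \<delta> i) * absv (w i)"
            using adiff_comm[of "\<delta> i" "dd n i"] by (simp add: amult)
          also have "\<dots> \<le> e / (absv (w i) + 1) * absv (w i)" using h nonneg by (intro mult_right_mono) auto
          also have "\<dots> < e" using wpos e by (simp add: field_simps)
          finally show "absv ((\<delta> i - dd n i) * w i) < e" .
        qed
      qed
      obtain N where N: "inverse (real (Suc N)) < e" using reals_Archimedean e by blast
      have ev2: "eventually (\<lambda>n. 1 / real (Suc n) < e) sequentially"
        unfolding eventually_sequentially
      proof (intro exI[of _ N] allI impI)
        fix n assume "n \<ge> N"
        then have "1 / real (Suc n) \<le> inverse (real (Suc N))" by (simp add: field_simps)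
        then show "1 / real (Suc n) < e" using N by linarith
      qed
      obtain n where n: "\<forall>i\<in>I. absv ((\<delta> i - dd n i) * w i) < e" "1 / real (Suc n) < e"
        using eventually_conj[OF ev1 ev2] unfolding eventually_sequentially by blast
      have eq: "w k + (\<Sum>i\<in>I. \<delta> i * w i) = y n + (\<Sum>i\<in>I. (\<delta> i - dd n i) * w i)"
        unfolding y_def by (simp add: left_diff_distrib sum_subtractf)
      have "absv (y n) < e" using dd(2)[of n] n(2) unfolding y_def by linarith
      moreover have "absv (\<Sum>i\<in>I. (\<delta> i - dd n i) * w i) < e" using n(1) e insert.hyps(1) by (intro asum_less) auto
      ultimately show "absv (w k + (\<Sum>i\<in>I. \<delta> i * w i)) < e" unfolding eq
        by (intro le_less_trans[OF ultra]) simp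
    qed
    then have "(\<Sum>i\<in>insert k I. c i * w i) = 0" using Y by simp
    then have "\<forall>i\<in>insert k I. c i = 0" using insert.prems cK by blast
    then show False by (simp add: c_def)
  qed
  then obtain D where D: "D > 0" "\<And>d. \<forall>i\<in>I. d i \<in> K0 \<Longrightarrow> D \<le> absv (w k + (\<Sum>i\<in>I. d i * w i))" by blast
  define M where "M = max 1 (absv (w k) / D)"
  have M: "M \<ge> 1" by (simp add: M_def)
  show ?case
  proof (intro exI[of _ "min D (C / M)"] conjI allI impI ballI)
    show "min D (C / M) > 0" using D C M by simp
    fix c j assume c: "\<forall>i\<in>insert k I. c i \<in> K0" and j: "j \<in> insert k I"
    let ?N = "absv (\<Sum>i\<in>insert k I. c i * w i)"
    have N0: "?N \<ge> 0" by (rule nonneg)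
    have sumI: "(\<Sum>i\<in>insert k I. c i * w i) = c k * w k + (\<Sum>i\<in>I. c i * w i)" using insert.hyps by simp
    have minC: "min D (C / M) \<le> C / M" by simp
    have CM: "C / M \<le> C" using C(1) M by (simp add: field_simps)
    show "min D (C / M) * absv (c j) \<le> ?N"
    proof (cases "c k = 0")
      case True
      then have eqN: "?N = absv (\<Sum>i\<in>I. c i * w i)" using sumI by simp
      show ?thesis
      proof (cases "j = k")
        case True then show ?thesis using \<open>c k = 0\<close> N0 by simp
      next
        case False
        then have "j \<in> I" using j by simp
        then have "C * absv (c j) \<le> ?N" using C(2) c eqN by auto
        moreover have "min D (C / M) * absv (c j) \<le> C * absv (c j)"
          using minC CM nonneg[of "c j"] by (intro mult_right_mono) auto
        ultimately show ?thesis by linarith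
      qed
    next
      case False
      define d where "d i = c i / c k" for i
      have dK: "\<forall>i\<in>I. d i \<in> K0" using c K0_div unfolding d_def by auto
      have "c k * (\<Sum>i\<in>I. d i * w i) = (\<Sum>i\<in>I. c i * w i)"
        unfolding sum_distrib_left d_def using False by (intro sum.cong) auto
      then have fact: "(\<Sum>i\<in>insert k I. c i * w i) = c k * (w k + (\<Sum>i\<in>I. d i * w i))"
        using sumI by (simp add: distrib_left)
      have NkD: "absv (c k) * D \<le> ?N"
        unfolding fact amult using D(2)[OF dK] nonneg[of "c k"] by (intro mult_left_mono) auto
      show ?thesis
      proof (cases "j = k")
        case True
        have "min D (C / M) * absv (c j) \<le> D * absv (c j)" using nonneg[of "c j"] by (intro mult_right_mono) auto
        then show ?thesis using NkD True by (simp add: mult.commute)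
      next
        case False
        then have jI: "j \<in> I" using j by simp
        have "C * absv (c j) \<le> absv (\<Sum>i\<in>I. c i * w i)" using C(2) c jI by auto
        also have "(\<Sum>i\<in>I. c i * w i) = (\<Sum>i\<in>insert k I. c i * w i) - c k * w k" using sumI by simp
        also have "absv \<dots> \<le> max ?N (absv (c k * w k))" by (rule adiff)
        also have "\<dots> \<le> ?N * M"
        proof -
          have "?N \<le> ?N * M" using N0 M by (simp add: mult_le_cancel_left1)
          moreover have "absv (c k * w k) \<le> ?N * M"
          proof -
            have "absv (c k * w k) = (absv (c k) * D) * (absv (w k) / D)" using D(1) by (simp add: amult)
            also have "\<dots> \<le> ?N * (absv (w k) / D)" using NkD nonneg[of "w k"] D(1) by (intro mult_right_mono) auto
            also have "\<dots> \<le> ?N * M" using N0 unfolding M_def by (intro mult_left_mono) auto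
            finally show ?thesis .
          qed
          ultimately show ?thesis by simp
        qed
        finally have "C * absv (c j) \<le> ?N * M" .
        then have "(C / M) * absv (c j) \<le> ?N" using M by (simp add: field_simps)
        moreover have "min D (C / M) * absv (c j) \<le> (C / M) * absv (c j)"
          using minC nonneg[of "c j"] by (intro mult_right_mono) auto
        ultimately show ?thesis by linarith
      qed
    qed
  qed
qed

lemma finite_deg: "finite {p :: 'f poly. degree p \<le> N}"
proof -
  let ?B = "{g :: nat \<Rightarrow> 'f. \<forall>x. (x \<in> {..N} \<longrightarrow> g x \<in> UNIV) \<and> (x \<notin> {..N} \<longrightarrow> g x = 0)}"
  have fB: "finite ?B" by (rule finite_set_of_finite_funs) auto
  have inj: "inj_on coeff {p :: 'f poly. degree p \<le> N}" by (rule inj_onI) (simp add: poly_eq_iff)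
  have "coeff ` {p :: 'f poly. degree p \<le> N} \<subseteq> ?B"
    by (auto intro: coeff_eq_0)
  then have "finite (coeff ` {p :: 'f poly. degree p \<le> N})" using fB finite_subset by blast
  then show ?thesis using finite_imageD inj by blast
qed

lemma deg_bound: assumes "p \<noteq> 0" shows "real (degree p) \<le> absv (evalA \<iota> p \<theta>)"
proof -
  have "degree p < 2 ^ degree p" by (rule less_exp)
  then have "real (degree p) \<le> 2 ^ degree p" by (metis less_imp_le of_nat_le_iff of_nat_numeral of_nat_power)
  also have "(2::real) ^ degree p \<le> real CARD('f) ^ degree p" using card_ge2 by (intro power_mono) auto
  finally show ?thesis using evalA_theta_abs[OF assms] by simp
qed

lemma discrete:
  fixes z :: "nat \<Rightarrow> 'c"
  assumes indep: "\<forall>c. (\<forall>i\<in>{1..r}. c i \<in> Kinf \<iota> \<theta> absv) \<longrightarrow> (\<Sum>i=1..r. c i * z i) = 0 \<longrightarrow> (\<forall>i\<in>{1..r}. c i = 0)"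
  shows "finite {a :: nat \<Rightarrow> 'f poly. (\<forall>i. i \<notin> {1..r} \<longrightarrow> a i = 0) \<and> absv (\<Sum>i=1..r. evalA \<iota> (a i) \<theta> * z i) \<le> M}"
proof -
  obtain C where C: "C > 0" "\<forall>c. (\<forall>i\<in>{1..r}. c i \<in> K0) \<longrightarrow> (\<forall>j\<in>{1..r}. C * absv (c j) \<le> absv (\<Sum>i=1..r. c i * z i))"
    using norm_equiv[of "{1..r}" z] indep by auto
  define N where "N = nat \<lceil>M / C\<rceil>"
  let ?B = "{p :: 'f poly. degree p \<le> N}"
  have "{a :: nat \<Rightarrow> 'f poly. (\<forall>i. i \<notin> {1..r} \<longrightarrow> a i = 0) \<and> absv (\<Sum>i=1..r. evalA \<iota> (a i) \<theta> * z i) \<le> M}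
      \<subseteq> {a. \<forall>x. (x \<in> {1..r} \<longrightarrow> a x \<in> ?B) \<and> (x \<notin> {1..r} \<longrightarrow> a x = 0)}"
  proof
    fix a assume a: "a \<in> {a :: nat \<Rightarrow> 'f poly. (\<forall>i. i \<notin> {1..r} \<longrightarrow> a i = 0) \<and> absv (\<Sum>i=1..r. evalA \<iota> (a i) \<theta> * z i) \<le> M}"
    have "a x \<in> ?B" if x: "x \<in> {1..r}" for x
    proof (cases "a x = 0")
      case False
      have "\<forall>i\<in>{1..r}. evalA \<iota> (a i) \<theta> \<in> K0" using K0_eval by blast
      then have "C * absv (evalA \<iota> (a x) \<theta>) \<le> absv (\<Sum>i=1..r. evalA \<iota> (a i) \<theta> * z i)"
        using spec[OF C(2), of "\<lambda>i. evalA \<iota> (a i) \<theta>"] x by simp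
      then have "C * absv (evalA \<iota> (a x) \<theta>) \<le> M" using a by simp
      then have "absv (evalA \<iota> (a x) \<theta>) \<le> M / C" using C(1) by (simp add: field_simps)
      then have "real (degree (a x)) \<le> M / C" using deg_bound[OF False] by linarith
      then have "degree (a x) \<le> N" unfolding N_def by linarith
      then show ?thesis by simp
    qed simp
    moreover have "a x = 0" if "x \<notin> {1..r}" for x using a that by auto
    ultimately show "a \<in> {a. \<forall>x. (x \<in> {1..r} \<longrightarrow> a x \<in> ?B) \<and> (x \<notin> {1..r} \<longrightarrow> a x = 0)}" by blast
  qed
  moreover have "finite {a. \<forall>x. (x \<in> {1..r} \<longrightarrow> a x \<in> ?B) \<and> (x \<notin> {1..r} \<longrightarrow> a x = (0::'f poly))}"
    by (rule finite_set_of_finite_funs) (simp_all add: finite_deg)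
  ultimately show ?thesis using finite_subset by blast
qed

end

lemma degree_pderiv_le: "degree (pderiv p) \<le> degree p - 1"
  by (rule degree_le) (auto simp: coeff_pderiv coeff_eq_0)

lemma subgroup_identity:
  fixes V :: "'c::field set"
  assumes fin: "finite V" and z: "0 \<in> V" and sub: "\<And>a b. a \<in> V \<Longrightarrow> b \<in> V \<Longrightarrow> a - b \<in> V" and x: "x \<notin> V"
  shows "(x * (\<Prod>l\<in>V - {0}. 1 - x / l)) * (\<Sum>l\<in>V. 1 / (x - l)) = 1"
proof -
  define Q where "Q = (\<Prod>l\<in>V. [:l, -1:])"
  have polyQ: "poly Q y = (\<Prod>l\<in>V. l - y)" for y unfolding Q_def by (simp add: poly_prod)
  have degQ: "degree Q = card V" unfolding Q_def
    by (subst degree_prod_eq_sum_degree) auto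
  define K where "K = (\<Prod>c\<in>V - {0}. c)"
  have K0: "K \<noteq> 0" unfolding K_def using fin by (subst prod_zero_iff) auto
  have pd1: "pderiv [:a, -1:] = [:-1:]" for a :: 'c by (simp add: pderiv_pCons)
  have pdQ: "pderiv Q = (\<Sum>a\<in>V. (\<Prod>l\<in>V - {a}. [:l, -1:]) * [:-1:])"
    unfolding Q_def pderiv_prod pd1 ..
  have evpd: "poly (pderiv Q) y = - (\<Sum>a\<in>V. \<Prod>l\<in>V - {a}. l - y)" for y
    unfolding pdQ by (simp add: poly_sum poly_prod sum_negf)
  have atV: "poly (pderiv Q) \<mu> = - K" if mu: "\<mu> \<in> V" for \<mu>
  proof -
    have "(\<Sum>a\<in>V. \<Prod>l\<in>V - {a}. l - \<mu>) = (\<Prod>l\<in>V - {\<mu>}. l - \<mu>) + (\<Sum>a\<in>V - {\<mu>}. \<Prod>l\<in>V - {a}. l - \<mu>)"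
      using fin mu by (rule sum.remove)
    also have "(\<Sum>a\<in>V - {\<mu>}. \<Prod>l\<in>V - {a}. l - \<mu>) = 0"
    proof (rule sum.neutral, rule ballI)
      fix a assume "a \<in> V - {\<mu>}"
      then have "\<mu> \<in> V - {a}" using mu by auto
      then show "(\<Prod>l\<in>V - {a}. l - \<mu>) = 0" using fin by (subst prod_zero_iff) auto
    qed
    also have "(\<Prod>l\<in>V - {\<mu>}. l - \<mu>) = K"
    proof -
      have "bij_betw (\<lambda>l. l - \<mu>) (V - {\<mu>}) (V - {0})"
      proof (rule bij_betw_byWitness[where f' = "\<lambda>c. c + \<mu>"])
        show "(\<lambda>l. l - \<mu>) ` (V - {\<mu>}) \<subseteq> V - {0}" using sub mu by auto
        have "c + \<mu> \<in> V" if "c \<in> V" for c using sub[OF that sub[OF z mu]] by simp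
        then show "(\<lambda>c. c + \<mu>) ` (V - {0}) \<subseteq> V - {\<mu>}" by auto
      qed auto
      then show ?thesis unfolding K_def by (rule prod.reindex_bij_betw)
    qed
    finally show ?thesis using evpd by simp
  qed
  have "pderiv Q + [:K:] = 0"
  proof (rule ccontr)
    assume nz: "pderiv Q + [:K:] \<noteq> 0"
    have "V \<subseteq> {y. poly (pderiv Q + [:K:]) y = 0}" using atV by auto
    then have "card V \<le> card {y. poly (pderiv Q + [:K:]) y = 0}"
      using poly_roots_finite[OF nz] by (rule card_mono[rotated])
    also have "\<dots> \<le> degree (pderiv Q + [:K:])" by (rule card_poly_roots_bound[OF nz])
    also have "\<dots> \<le> max (degree (pderiv Q)) (degree [:K:])" by (rule degree_add_le_max)
    also have "\<dots> \<le> card V - 1" using degree_pderiv_le[of Q] degQ by simp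
    finally have "card V \<le> card V - 1" .
    moreover have "card V > 0" using fin z by (auto simp: card_gt_0_iff)
    ultimately show False by linarith
  qed
  then have "poly (pderiv Q + [:K:]) x = 0" by simp
  then have "poly (pderiv Q) x + K = 0" by simp
  then have "poly (pderiv Q) x = - K" by (simp add: eq_neg_iff_add_eq_0)
  then have sumK: "(\<Sum>a\<in>V. \<Prod>l\<in>V - {a}. l - x) = K" using evpd by simp
  have xa: "a - x \<noteq> 0" if "a \<in> V" for a using x that by auto
  have prod_rem: "(\<Prod>l\<in>V - {a}. l - x) = poly Q x / (a - x)" if "a \<in> V" for a
  proof -
    have "poly Q x = (a - x) * (\<Prod>l\<in>V - {a}. l - x)" unfolding polyQ using fin that by (rule prod.remove)
    then show ?thesis using xa[OF that] by simp
  qed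
  have "(\<Sum>a\<in>V. \<Prod>l\<in>V - {a}. l - x) = poly Q x * (\<Sum>a\<in>V. 1 / (a - x))"
    unfolding sum_distrib_left using prod_rem by (intro sum.cong) auto
  then have KQ: "K = poly Q x * (\<Sum>a\<in>V. 1 / (a - x))" using sumK by simp
  have Qx: "poly Q x = (0 - x) * (\<Prod>l\<in>V - {0}. l - x)" unfolding polyQ using fin z by (rule prod.remove)
  have "(\<Prod>l\<in>V - {0}. 1 - x / l) = (\<Prod>l\<in>V - {0}. (l - x) / l)"
    by (intro prod.cong) (auto simp: field_simps)
  also have "\<dots> = (\<Prod>l\<in>V - {0}. l - x) / K" unfolding K_def by (rule prod_dividef)
  finally have eP: "x * (\<Prod>l\<in>V - {0}. 1 - x / l) = - poly Q x / K" using Qx by simp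
  have S: "(\<Sum>l\<in>V. 1 / (x - l)) = - (\<Sum>a\<in>V. 1 / (a - x))"
    unfolding sum_negf[symmetric] by (intro sum.cong refl) (metis divide_minus_right minus_diff_eq)
  show ?thesis unfolding eP S using KQ K0 by (simp add: field_simps)
qed


context cinf begin

definition indep :: "nat \<Rightarrow> (nat \<Rightarrow> 'c) \<Rightarrow> bool" where
  "indep r z \<longleftrightarrow> (\<forall>c. (\<forall>i\<in>{1..r}. c i \<in> Kinf \<iota> \<theta> absv) \<longrightarrow> (\<Sum>i=1..r. c i * z i) = 0 \<longrightarrow> (\<forall>i\<in>{1..r}. c i = 0))"

definition lat :: "'c \<Rightarrow> nat \<Rightarrow> (nat \<Rightarrow> 'c) \<Rightarrow> 'c set" where
  "lat p r z = {\<Sum>i=2..r. p * evalA \<iota> (a i) \<theta> * z i | a. True}"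

end

locale latt = cinf \<iota> \<theta> absv for \<iota> :: "'f::{finite,field} \<Rightarrow> 'c::field" and \<theta> absv +
  fixes p :: 'c and r :: nat and z :: "nat \<Rightarrow> 'c"
  assumes pnz: "p \<noteq> 0" and r2: "r \<ge> 2" and ind: "indep r z"
begin

abbreviation "Lam \<equiv> lat p r z"

lemma sum_split1: "(\<Sum>i=1..r. f i) = f 1 + (\<Sum>i=2..r. f i)"
proof -
  have "(\<Sum>i=1..r. f i) = f 1 + (\<Sum>i=Suc 1..r. f i)" using r2 by (intro sum.atLeast_Suc_atMost) simp
  also have "Suc 1 = 2" by simp
  finally show ?thesis .
qed

lemma lam_zero: "0 \<in> Lam"
  unfolding lat_def by (rule CollectI, rule exI[of _ "\<lambda>_. 0"]) simp

lemma lam_diff: assumes "u \<in> Lam" "v \<in> Lam" shows "u - v \<in> Lam"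
proof -
  obtain a where a: "u = (\<Sum>i=2..r. p * evalA \<iota> (a i) \<theta> * z i)" using assms(1) unfolding lat_def by blast
  obtain b where b: "v = (\<Sum>i=2..r. p * evalA \<iota> (b i) \<theta> * z i)" using assms(2) unfolding lat_def by blast
  have "u - v = (\<Sum>i=2..r. p * evalA \<iota> (a i - b i) \<theta> * z i)"
    unfolding a b sum_subtractf[symmetric] by (intro sum.cong) (auto simp: evalA_diff algebra_simps)
  then show ?thesis unfolding lat_def by (intro CollectI exI[of _ "\<lambda>i. a i - b i"]) simp
qed

lemma lam_ball_finite: "finite {l \<in> Lam. absv l \<le> R}"
proof -
  let ?S = "{a :: nat \<Rightarrow> 'f poly. (\<forall>i. i \<notin> {1..r} \<longrightarrow> a i = 0) \<and> absv (\<Sum>i=1..r. evalA \<iota> (a i) \<theta> * z i) \<le> R / absv p}"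
  have fin: "finite ?S" using discrete ind unfolding indep_def by blast
  have ap: "absv p > 0" using pnz zero_iff nonneg by (metis order_le_less)
  have "{l \<in> Lam. absv l \<le> R} \<subseteq> (\<lambda>a. \<Sum>i=2..r. p * evalA \<iota> (a i) \<theta> * z i) ` ?S"
  proof
    fix l assume l: "l \<in> {l \<in> Lam. absv l \<le> R}"
    then obtain b where b: "l = (\<Sum>i=2..r. p * evalA \<iota> (b i) \<theta> * z i)" unfolding lat_def by blast
    define a where "a i = (if i \<in> {2..r} then b i else 0)" for i
    have la: "l = (\<Sum>i=2..r. p * evalA \<iota> (a i) \<theta> * z i)" unfolding b a_def by (intro sum.cong) auto
    have s1: "(\<Sum>i=1..r. evalA \<iota> (a i) \<theta> * z i) = (\<Sum>i=2..r. evalA \<iota> (a i) \<theta> * z i)"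
      unfolding sum_split1 by (simp add: a_def)
    have "l = p * (\<Sum>i=2..r. evalA \<iota> (a i) \<theta> * z i)" unfolding la sum_distrib_left by (simp add: mult.assoc)
    then have "absv l = absv p * absv (\<Sum>i=1..r. evalA \<iota> (a i) \<theta> * z i)" unfolding s1 by (simp add: amult)
    then have "absv (\<Sum>i=1..r. evalA \<iota> (a i) \<theta> * z i) \<le> R / absv p" using l ap by (simp add: field_simps)
    moreover have "\<forall>i. i \<notin> {1..r} \<longrightarrow> a i = 0" by (auto simp: a_def)
    ultimately show "l \<in> (\<lambda>a. \<Sum>i=2..r. p * evalA \<iota> (a i) \<theta> * z i) ` ?S" using la by blast
  qed
  then show ?thesis using fin finite_subset by blast
qed

lemma x_notin: assumes "a1 \<noteq> 0" shows "p * evalA \<iota> a1 \<theta> * z 1 \<notin> Lam"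
proof
  assume "p * evalA \<iota> a1 \<theta> * z 1 \<in> Lam"
  then obtain b where b: "p * evalA \<iota> a1 \<theta> * z 1 = (\<Sum>i=2..r. p * evalA \<iota> (b i) \<theta> * z i)"
    unfolding lat_def by blast
  define c where "c i = (if i = 1 then evalA \<iota> a1 \<theta> else evalA \<iota> (- b i) \<theta>)" for i
  have cK: "\<forall>i\<in>{1..r}. c i \<in> Kinf \<iota> \<theta> absv" using eval_Kinf by (simp add: c_def)
  have "p * (\<Sum>i=1..r. c i * z i) = p * evalA \<iota> a1 \<theta> * z 1 - (\<Sum>i=2..r. p * evalA \<iota> (b i) \<theta> * z i)"
    unfolding sum_split1 sum_distrib_left distrib_left
    by (simp add: c_def evalA_minus sum_negf algebra_simps)
  then have "p * (\<Sum>i=1..r. c i * z i) = 0" using b by simp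
  then have "(\<Sum>i=1..r. c i * z i) = 0" using pnz by simp
  then have "c 1 = 0" using ind cK r2 unfolding indep_def by auto
  then show False using evalA_nz[OF assms] by (simp add: c_def)
qed

lemma lam_sum_exists: assumes "x \<notin> Lam" shows "\<exists>S. ahas_sum absv (\<lambda>l. 1 / (x - l)) Lam S"
proof (rule ahas_sum_exists)
  fix e :: real assume e: "e > 0"
  have "{l \<in> Lam. e \<le> absv (1 / (x - l))} \<subseteq> {l \<in> Lam. absv l \<le> max (absv x) (1 / e)}"
  proof
    fix l assume l: "l \<in> {l \<in> Lam. e \<le> absv (1 / (x - l))}"
    then have nz: "x - l \<noteq> 0" using assms by auto
    then have pos: "absv (x - l) > 0" using zero_iff nonneg by (metis order_le_less)
    have "e \<le> 1 / absv (x - l)" using l by (simp add: adivide)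
    then have "absv (x - l) \<le> 1 / e" using pos e by (simp add: field_simps)
    moreover have "absv l \<le> max (absv x) (absv (x - l))" using adiff[of x "x - l"] by simp
    ultimately show "l \<in> {l \<in> Lam. absv l \<le> max (absv x) (1 / e)}" using l by auto
  qed
  then show "finite {l \<in> Lam. e \<le> absv (1 / (x - l))}" using lam_ball_finite finite_subset by blast
qed

lemma lam_prod_exists: "\<exists>P. ahas_prod absv (\<lambda>l. 1 - x / l) (Lam - {0}) P"
proof (rule ahas_prod_exists)
  fix e :: real assume e: "e > 0"
  have "{l \<in> Lam - {0}. e \<le> absv (1 - x / l - 1)} \<subseteq> {l \<in> Lam. absv l \<le> absv x / e}"
  proof
    fix l assume l: "l \<in> {l \<in> Lam - {0}. e \<le> absv (1 - x / l - 1)}"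
    then have pos: "absv l > 0" using zero_iff nonneg by (metis order_le_less DiffD2 insertI1 mem_Collect_eq)
    have "e \<le> absv x / absv l" using l by (simp add: adivide)
    then have "absv l \<le> absv x / e" using pos e by (simp add: field_simps)
    then show "l \<in> {l \<in> Lam. absv l \<le> absv x / e}" using l by auto
  qed
  then show "finite {l \<in> Lam - {0}. e \<le> absv (1 - x / l - 1)}" using lam_ball_finite finite_subset by blast
qed

end

context latt begin

lemma exp_sum_identity:
  assumes x: "x \<notin> Lam" and P: "ahas_prod absv (\<lambda>l. 1 - x / l) (Lam - {0}) P"
    and S: "ahas_sum absv (\<lambda>l. 1 / (x - l)) Lam S"
  shows "x * P * S = 1"
proof -
  have "x * P * S - 1 = 0"
  proof (rule small_zero_le[where C = "absv x * (absv S + absv P + 1)"])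
    fix e :: real assume e: "e > 0"
    define \<epsilon> where "\<epsilon> = min e 1"
    have \<epsilon>: "\<epsilon> > 0" "\<epsilon> \<le> 1" "\<epsilon> \<le> e" using e by (auto simp: \<epsilon>_def)
    obtain F0 where F0: "finite F0" "F0 \<subseteq> Lam" "\<forall>F. finite F \<and> F0 \<subseteq> F \<and> F \<subseteq> Lam \<longrightarrow> absv (sum (\<lambda>l. 1 / (x - l)) F - S) < \<epsilon>"
      by (rule ahas_sumD[OF S \<epsilon>(1)])
    obtain F1 where F1: "finite F1" "F1 \<subseteq> Lam - {0}" "\<forall>F. finite F \<and> F1 \<subseteq> F \<and> F \<subseteq> Lam - {0} \<longrightarrow> absv (prod (\<lambda>l. 1 - x / l) F - P) < \<epsilon>"
      by (rule ahas_prodD[OF P \<epsilon>(1)])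
    define R where "R = (\<Sum>l\<in>F0 \<union> F1. absv l)"
    define V where "V = {l \<in> Lam. absv l \<le> R}"
    have R0: "R \<ge> 0" unfolding R_def by (intro sum_nonneg) (simp add: nonneg)
    have FR: "absv l \<le> R" if "l \<in> F0 \<union> F1" for l
      unfolding R_def using that F0(1) F1(1) by (intro member_le_sum) (auto simp: nonneg)
    have Vfin: "finite V" unfolding V_def by (rule lam_ball_finite)
    have V0: "0 \<in> V" unfolding V_def using lam_zero R0 by simp
    have Vsub: "a - b \<in> V" if "a \<in> V" "b \<in> V" for a b
    proof -
      have "absv (a - b) \<le> max (absv a) (absv b)" by (rule adiff)
      then show ?thesis using that lam_diff unfolding V_def by auto
    qed
    have xV: "x \<notin> V" using x unfolding V_def by auto
    have F0V: "F0 \<subseteq> V" using F0(2) FR unfolding V_def by auto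
    have F1V: "F1 \<subseteq> V - {0}" using F1(2) FR unfolding V_def by auto
    define pV where "pV = (\<Prod>l\<in>V - {0}. 1 - x / l)"
    define sV where "sV = (\<Sum>l\<in>V. 1 / (x - l))"
    have id: "x * pV * sV = 1" unfolding pV_def sV_def using subgroup_identity[OF Vfin V0 Vsub xV] by simp
    have d1: "absv (sV - S) < \<epsilon>" unfolding sV_def using F0(3) Vfin F0V by (auto simp: V_def)
    have d2: "absv (pV - P) < \<epsilon>" unfolding pV_def using F1(3) Vfin F1V by (auto simp: V_def)
    have pVb: "absv pV \<le> absv P + 1"
    proof -
      have "absv pV = absv (P + (pV - P))" by simp
      also have "\<dots> \<le> max (absv P) (absv (pV - P))" by (rule ultra)
      finally show ?thesis using d2 \<epsilon> nonneg[of P] by linarith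
    qed
    have eq: "x * P * S - 1 = x * ((P - pV) * S + pV * (S - sV))" using id by (simp add: algebra_simps)
    have "absv ((P - pV) * S + pV * (S - sV)) \<le> max (absv ((P - pV) * S)) (absv (pV * (S - sV)))" by (rule ultra)
    also have "\<dots> \<le> \<epsilon> * (absv S + absv P + 1)"
    proof (rule max.boundedI)
      have "absv ((P - pV) * S) = absv (pV - P) * absv S" by (simp add: amult adiff_comm)
      also have "\<dots> \<le> \<epsilon> * absv S" using d2 nonneg[of S] by (intro mult_right_mono) auto
      also have "\<dots> \<le> \<epsilon> * (absv S + absv P + 1)" using \<epsilon> nonneg[of P] by (intro mult_left_mono) auto
      finally show "absv ((P - pV) * S) \<le> \<epsilon> * (absv S + absv P + 1)" .
      have "absv (pV * (S - sV)) = absv pV * absv (sV - S)" by (simp add: amult adiff_comm)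
      also have "\<dots> \<le> (absv P + 1) * \<epsilon>" using pVb d1 nonneg by (intro mult_mono) auto
      also have "\<dots> \<le> \<epsilon> * (absv S + absv P + 1)" using \<epsilon> nonneg[of S] by (simp add: algebra_simps)
      finally show "absv (pV * (S - sV)) \<le> \<epsilon> * (absv S + absv P + 1)" .
    qed
    also have "\<dots> \<le> e * (absv S + absv P + 1)" using \<epsilon> nonneg[of S] nonneg[of P] by (intro mult_right_mono) auto
    finally have "absv ((P - pV) * S + pV * (S - sV)) \<le> e * (absv S + absv P + 1)" .
    then have "absv x * absv ((P - pV) * S + pV * (S - sV)) \<le> absv x * (e * (absv S + absv P + 1))"
      using nonneg[of x] by (intro mult_left_mono) auto
    then show "absv (x * P * S - 1) \<le> absv x * (absv S + absv P + 1) * e" unfolding eq amult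
      by (simp add: algebra_simps)
  qed
  then show ?thesis by simp
qed

lemma inv_exp: assumes x: "x \<notin> Lam" and S: "ahas_sum absv (\<lambda>l. 1 / (x - l)) Lam S"
  shows "inverse (expL absv Lam x) = S"
proof -
  obtain P where P: "ahas_prod absv (\<lambda>l. 1 - x / l) (Lam - {0}) P" using lam_prod_exists by blast
  have "(THE P. ahas_prod absv (\<lambda>l. 1 - x / l) (Lam - {0}) P) = P"
    using P ahas_prod_unique by blast
  then have "expL absv Lam x = x * P" unfolding expL_def by simp
  moreover have "(x * P) * S = 1" using exp_sum_identity[OF x P S] by simp
  then have "inverse (x * P) = S" by (rule inverse_unique)
  ultimately show ?thesis by simp
qed

definition Iset :: "(nat \<Rightarrow> 'f poly) set" where
  "Iset = {a :: nat \<Rightarrow> 'f poly. (\<forall>i. i \<notin> {1..r} \<longrightarrow> a i = 0) \<and> a \<noteq> (\<lambda>_. 0)}"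

definition ff :: "'c \<Rightarrow> (nat \<Rightarrow> 'f poly) \<Rightarrow> 'c" where
  "ff t a = evalA \<iota> (a 1) t / (\<Sum>i=1..r. evalA \<iota> (a i) \<theta> * z i)"

definition hh :: "(nat \<Rightarrow> 'f poly) \<Rightarrow> 'c" where
  "hh a = (\<Sum>i=2..r. p * evalA \<iota> (- a i) \<theta> * z i)"

lemma hh_bij: assumes a1: "a1 \<noteq> 0" shows "bij_betw hh {a \<in> Iset. a 1 = a1} Lam"
  unfolding bij_betw_def
proof (intro conjI)
  show "inj_on hh {a \<in> Iset. a 1 = a1}"
  proof (rule inj_onI)
    fix a a' assume a: "a \<in> {a \<in> Iset. a 1 = a1}" and a': "a' \<in> {a \<in> Iset. a 1 = a1}" and h: "hh a = hh a'"
    define c where "c i = (if i = 1 then 0 else evalA \<iota> (a i - a' i) \<theta>)" for i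
    have cK: "\<forall>i\<in>{1..r}. c i \<in> Kinf \<iota> \<theta> absv" using eval_Kinf zero_Kinf by (simp add: c_def)
    have s12: "(\<Sum>i=1..r. c i * z i) = (\<Sum>i=2..r. c i * z i)" unfolding sum_split1 by (simp add: c_def)
    have "p * (\<Sum>i=2..r. c i * z i) = hh a' - hh a"
      unfolding hh_def sum_distrib_left sum_subtractf[symmetric]
      by (intro sum.cong) (auto simp: c_def evalA_diff evalA_minus algebra_simps)
    then have "p * (\<Sum>i=1..r. c i * z i) = hh a' - hh a" unfolding s12 .
    then have "(\<Sum>i=1..r. c i * z i) = 0" using h pnz by simp
    then have c0: "\<forall>i\<in>{1..r}. c i = 0" using ind cK unfolding indep_def by blast
    show "a = a'"
    proof
      fix i
      show "a i = a' i"
      proof (cases "i \<in> {2..r}")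
        case True
        then have "i \<in> {1..r}" "i \<noteq> 1" by auto
        then have "c i = 0" using c0 by blast
        then have "evalA \<iota> (a i - a' i) \<theta> = 0" using \<open>i \<noteq> 1\<close> by (simp add: c_def)
        then have "a i - a' i = 0" using evalA_nz by blast
        then show ?thesis by simp
      next
        case False
        then show ?thesis using a a' unfolding Iset_def by (cases "i = 1") auto
      qed
    qed
  qed
  show "hh ` {a \<in> Iset. a 1 = a1} = Lam"
  proof
    show "hh ` {a \<in> Iset. a 1 = a1} \<subseteq> Lam"
      unfolding hh_def lat_def by (auto intro!: exI[of _ "\<lambda>i. - _ i"])
    show "Lam \<subseteq> hh ` {a \<in> Iset. a 1 = a1}"
    proof
      fix l assume "l \<in> Lam"
      then obtain b where b: "l = (\<Sum>i=2..r. p * evalA \<iota> (b i) \<theta> * z i)" unfolding lat_def by blast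
      define a where "a i = (if i = 1 then a1 else if i \<in> {2..r} then - b i else 0)" for i
      have "a \<in> {a \<in> Iset. a 1 = a1}" unfolding Iset_def
      proof (intro CollectI conjI allI impI)
        show "a \<noteq> (\<lambda>_. 0)" using a1 by (metis a_def)
      qed (use r2 in \<open>auto simp: a_def\<close>)
      moreover have "hh a = l" unfolding hh_def b by (intro sum.cong) (auto simp: a_def)
      ultimately show "l \<in> hh ` {a \<in> Iset. a 1 = a1}" by blast
    qed
  qed
qed

lemma inner: assumes a1: "a1 \<noteq> 0"
  shows "ahas_sum absv (ff t) {a \<in> Iset. a 1 = a1}
           (evalA \<iota> a1 t * p * inverse (expL absv Lam (p * evalA \<iota> a1 \<theta> * z 1)))"
proof -
  define x where "x = p * evalA \<iota> a1 \<theta> * z 1"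
  have xn: "x \<notin> Lam" unfolding x_def by (rule x_notin[OF a1])
  obtain S where S: "ahas_sum absv (\<lambda>l. 1 / (x - l)) Lam S" using lam_sum_exists[OF xn] by blast
  have inv: "inverse (expL absv Lam x) = S" by (rule inv_exp[OF xn S])
  have "ahas_sum absv (\<lambda>a. 1 / (x - hh a)) {a \<in> Iset. a 1 = a1} S"
    by (rule ahas_sum_reindex[OF hh_bij[OF a1] S])
  then have "ahas_sum absv (\<lambda>a. evalA \<iota> a1 t * p * (1 / (x - hh a))) {a \<in> Iset. a 1 = a1} (evalA \<iota> a1 t * p * S)"
    by (rule ahas_sum_scale)
  moreover have "evalA \<iota> a1 t * p * (1 / (x - hh a)) = ff t a" if a: "a \<in> {a \<in> Iset. a 1 = a1}" for a
  proof -
    define D where "D = (\<Sum>i=1..r. evalA \<iota> (a i) \<theta> * z i)"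
    have "x - hh a = p * D"
      unfolding x_def hh_def D_def sum_split1 distrib_left sum_distrib_left using a
      by (simp add: evalA_minus sum_negf algebra_simps)
    moreover have "ff t a = evalA \<iota> a1 t / D" unfolding ff_def D_def using a by simp
    ultimately show ?thesis using pnz by (cases "D = 0") (simp_all add: field_simps)
  qed
  ultimately have "ahas_sum absv (ff t) {a \<in> Iset. a 1 = a1} (evalA \<iota> a1 t * p * S)"
    by (rule ahas_sum_cong[rotated])
  then show ?thesis using inv x_def by simp
qed

lemma main_latt: assumes t: "absv t \<le> 1"
  shows "\<exists>L R. ahas_sum absv (ff t) Iset L
    \<and> ahas_sum absv (\<lambda>a. evalA \<iota> a t * inverse (expL absv Lam (p * evalA \<iota> a \<theta> * z 1))) {a. a \<noteq> 0} R
    \<and> L = p * R"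
proof -
  have "\<exists>L. ahas_sum absv (ff t) Iset L"
  proof (rule ahas_sum_exists)
    fix e :: real assume e: "e > 0"
    have "{a \<in> Iset. e \<le> absv (ff t a)} \<subseteq> {a :: nat \<Rightarrow> 'f poly. (\<forall>i. i \<notin> {1..r} \<longrightarrow> a i = 0) \<and> absv (\<Sum>i=1..r. evalA \<iota> (a i) \<theta> * z i) \<le> 1 / e}"
    proof
      fix a assume a: "a \<in> {a \<in> Iset. e \<le> absv (ff t a)}"
      define D where "D = (\<Sum>i=1..r. evalA \<iota> (a i) \<theta> * z i)"
      have ffa: "absv (ff t a) = absv (evalA \<iota> (a 1) t) / absv D" unfolding ff_def D_def by (simp add: adivide)
      have "D \<noteq> 0"
      proof
        assume "D = 0"
        then have "absv (ff t a) = 0" using ffa by simp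
        then show False using a e by auto
      qed
      then have Dpos: "absv D > 0" using zero_iff nonneg by (metis order_le_less)
      have "e \<le> absv (evalA \<iota> (a 1) t) / absv D" using a ffa by simp
      also have "\<dots> \<le> 1 / absv D" using evalA_t_le[OF t] Dpos by (intro divide_right_mono) auto
      finally have "absv D \<le> 1 / e" using Dpos e by (simp add: field_simps)
      then show "a \<in> {a :: nat \<Rightarrow> 'f poly. (\<forall>i. i \<notin> {1..r} \<longrightarrow> a i = 0) \<and> absv (\<Sum>i=1..r. evalA \<iota> (a i) \<theta> * z i) \<le> 1 / e}"
        using a unfolding D_def Iset_def by auto
    qed
    moreover have "finite {a :: nat \<Rightarrow> 'f poly. (\<forall>i. i \<notin> {1..r} \<longrightarrow> a i = 0) \<and> absv (\<Sum>i=1..r. evalA \<iota> (a i) \<theta> * z i) \<le> 1 / e}"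
      using discrete ind unfolding indep_def by blast
    ultimately show "finite {a \<in> Iset. e \<le> absv (ff t a)}" using finite_subset by blast
  qed
  then obtain L where L: "ahas_sum absv (ff t) Iset L" by blast
  define s where "s k = evalA \<iota> k t * p * inverse (expL absv Lam (p * evalA \<iota> k \<theta> * z 1))" for k
  have parts: "ahas_sum absv (ff t) {a \<in> Iset. a 1 = k} (s k)" for k
  proof (cases "k = 0")
    case True
    have "s k = 0" using True by (simp add: s_def)
    moreover have "ahas_sum absv (ff t) {a \<in> Iset. a 1 = k} 0"
      by (rule ahas_sum_zero) (simp add: ff_def True)
    ultimately show ?thesis by simp
  next
    case False
    then show ?thesis unfolding s_def by (rule inner)
  qed
  have "ahas_sum absv s UNIV L" by (rule ahas_sum_regroup[OF L parts])
  then have "ahas_sum absv s (UNIV - {0}) L" by (rule ahas_sum_drop) (simp add: s_def)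
  then have "ahas_sum absv (\<lambda>k. inverse p * s k) (UNIV - {0}) (inverse p * L)" by (rule ahas_sum_scale)
  moreover have "UNIV - {0} = {a :: 'f poly. a \<noteq> 0}" by auto
  moreover have "inverse p * s k = evalA \<iota> k t * inverse (expL absv Lam (p * evalA \<iota> k \<theta> * z 1))" for k
    unfolding s_def using pnz by (simp add: field_simps)
  ultimately have R: "ahas_sum absv (\<lambda>a. evalA \<iota> a t * inverse (expL absv Lam (p * evalA \<iota> a \<theta> * z 1))) {a. a \<noteq> 0} (inverse p * L)"
    by simp
  show ?thesis using L R pnz by (intro exI[of _ L] exI[of _ "inverse p * L"]) simp
qed

end

context cinf begin

lemma pitilde_nz: assumes zeta: "\<zeta> ^ (CARD('f) - 1) = - \<theta>" shows "pitilde \<iota> \<theta> absv \<zeta> \<noteq> 0"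
proof -
  define q where "q = CARD('f)"
  define g where "g i = inverse (1 - inverse (\<theta> ^ (q ^ i - 1)))" for i :: nat
  define Pn where "Pn n = (\<Prod>i=1..n. g i)" for n
  have q2: "q \<ge> 2" unfolding q_def by (rule card_ge2)
  have gb: "absv (g i - 1) \<le> 1 / real (Suc i) \<and> absv (g i) = 1" if i: "i \<ge> 1" for i
  proof -
    define y where "y = inverse (\<theta> ^ (q ^ i - 1))"
    have ay: "absv y = inverse (real q ^ (q ^ i - 1))" unfolding y_def by (simp add: ainverse apower ath q_def)
    have "Suc i \<le> 2 ^ i" using less_exp[of i] by (simp only: Suc_le_eq)
    also have "(2::nat) ^ i \<le> q ^ i" using q2 by (intro power_mono) auto
    finally have si: "Suc i \<le> q ^ i" .
    then have "q ^ i \<le> q ^ (q ^ i - 1)" using q2 by (intro power_increasing) auto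
    with si have "Suc i \<le> q ^ (q ^ i - 1)" by linarith
    then have "real (Suc i) \<le> real q ^ (q ^ i - 1)" by (metis of_nat_le_iff of_nat_power)
    then have "inverse (real q ^ (q ^ i - 1)) \<le> inverse (real (Suc i))" by (rule le_imp_inverse_le) simp
    then have ayb: "absv y \<le> 1 / real (Suc i)" unfolding ay by (simp add: inverse_eq_divide)
    also have "\<dots> < 1" using i by (simp add: field_simps)
    finally have ay1: "absv y < 1" .
    have a1y: "absv (1 - y) = 1" using astrict[of "- y" 1] ay1 by simp
    then have nz: "1 - y \<noteq> 0" by auto
    have "g i = inverse (1 - y)" unfolding g_def y_def ..
    then have ge1: "g i - 1 = y / (1 - y)" using nz by (simp add: field_simps)
    have ge2: "absv (g i) = 1" using a1y \<open>g i = inverse (1 - y)\<close> by (simp add: ainverse)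
    show ?thesis using ge1 ge2 ayb a1y by (simp add: adivide)
  qed
  have Pn1: "absv (Pn n) = 1" for n
  proof (induction n)
    case (Suc n)
    have "Pn (Suc n) = Pn n * g (Suc n)" unfolding Pn_def by simp
    then show ?case using Suc gb[of "Suc n"] by (simp add: amult)
  qed (simp add: Pn_def)
  have key: "absv (Pn m - Pn n) \<le> 1 / real (Suc n)" if "n \<le> m" for m n
    using that
  proof (induction m rule: dec_induct)
    case (step m)
    have eq: "Pn (Suc m) - Pn n = Pn m * (g (Suc m) - 1) + (Pn m - Pn n)"
      unfolding Pn_def by (simp add: algebra_simps)
    have A: "absv (Pn m * (g (Suc m) - 1)) \<le> 1 / real (Suc n)"
    proof -
      have "absv (Pn m * (g (Suc m) - 1)) \<le> 1 / real (Suc (Suc m))" using gb[of "Suc m"] Pn1[of m] by (simp add: amult)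
      also have "\<dots> \<le> 1 / real (Suc n)" using step(1) by (simp add: frac_le)
      finally show ?thesis .
    qed
    show ?case unfolding eq by (rule order_trans[OF ultra]) (use A step(3) in simp)
  qed simp
  obtain L where L: "aseq_lim absv Pn L" using cauchy_helper[of Pn 1] key by auto
  obtain N where N: "absv (Pn N - L) < 1" using L unfolding aseq_lim_def by (meson order_refl zero_less_one)
  have "absv (Pn N + (L - Pn N)) = absv (Pn N)" using N Pn1[of N] adiff_comm[of "Pn N" L] by (intro astrict) simp
  then have aL: "absv L = 1" using Pn1[of N] by simp
  have theL: "(THE L. aseq_lim absv (\<lambda>n. \<Prod>i=1..n. inverse (1 - inverse (\<theta> ^ (CARD('f) ^ i - 1)))) L) = L"
    using L aseq_lim_unique unfolding Pn_def g_def q_def by blast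
  have th: "\<theta> \<noteq> 0" using ath q_gt1 by auto
  have ze: "\<zeta> \<noteq> 0"
  proof
    assume "\<zeta> = 0"
    moreover have "CARD('f) - 1 \<noteq> 0" using card_ge2 by simp
    ultimately have "\<zeta> ^ (CARD('f) - 1) = 0" by (simp add: zero_power)
    then have "- \<theta> = 0" by (rule trans[OF zeta[symmetric]])
    then show False using th by simp
  qed
  have "L \<noteq> 0" using aL by auto
  then show ?thesis unfolding pitilde_def theL using th ze by simp
qed

end

theorem lemma3p8:
  fixes \<iota> :: "'f::{finite,field} \<Rightarrow> 'c::field"
    and \<theta> \<zeta> t :: 'c and absv :: "'c \<Rightarrow> real" and r :: nat and z :: "nat \<Rightarrow> 'c"
  assumes "Cinf_model \<iota> \<theta> absv"
    and "\<zeta> ^ (CARD('f) - 1) = - \<theta>"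
    and "r \<ge> 2"
    and "z \<in> Omega \<iota> \<theta> absv r"
    and "absv t \<le> 1"
  shows "\<exists>L R.
    ahas_sum absv (\<lambda>a. evalA \<iota> (a 1) t / (\<Sum>i=1..r. evalA \<iota> (a i) \<theta> * z i))
      {a :: nat \<Rightarrow> 'f poly. (\<forall>i. i \<notin> {1..r} \<longrightarrow> a i = 0) \<and> a \<noteq> (\<lambda>_. 0)} L
    \<and> ahas_sum absv (\<lambda>a. evalA \<iota> a t * uA \<iota> \<theta> absv \<zeta> r a z) {a. a \<noteq> 0} R
    \<and> L = pitilde \<iota> \<theta> absv \<zeta> * R"
proof -
  interpret cinf \<iota> \<theta> absv by unfold_locales (rule assms(1))
  have pnz: "pitilde \<iota> \<theta> absv \<zeta> \<noteq> 0" by (rule pitilde_nz[OF assms(2)])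
  have ind: "indep r z" using assms(4) unfolding Omega_def indep_def by blast
  interpret latt \<iota> \<theta> absv "pitilde \<iota> \<theta> absv \<zeta>" r z
    by unfold_locales (use pnz assms(3) ind in auto)
  have zl: "zlattice \<iota> \<theta> absv \<zeta> r z = lat (pitilde \<iota> \<theta> absv \<zeta>) r z" unfolding zlattice_def lat_def ..
  have ffe: "ff t = (\<lambda>a. evalA \<iota> (a 1) t / (\<Sum>i=1..r. evalA \<iota> (a i) \<theta> * z i))" by (rule ext) (simp add: ff_def)
  have ue: "(\<lambda>a. evalA \<iota> a t * uA \<iota> \<theta> absv \<zeta> r a z) =
      (\<lambda>a. evalA \<iota> a t * inverse (expL absv (lat (pitilde \<iota> \<theta> absv \<zeta>) r z) (pitilde \<iota> \<theta> absv \<zeta> * evalA \<iota> a \<theta> * z 1)))"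
    by (rule ext) (simp add: uA_def zl)
  show ?thesis using main_latt[OF assms(5)] unfolding ffe ue Iset_def .
qed


end
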